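(* Let $Y/X$ be a Galois cover of finite digraphs with abelian Galois group $G=\mathrm{Gal}(Y/X)$, and let $F$ be an algebraically closed field of characteristic zero. Then $$g_Y(u)=g_X(u)\prod_{\substack{\psi\in\widehat G(F)\\ \psi\neq\psi_0}}g_{Y/X}(u,\psi).$$
   Context: Digraph $X=(V_X,E_X)$ with incidence $e\mapsto(o(e),t(e))$; strongly connected means a directed path exists between any two distinct vertices. A cover $f:Y\to X$ is a morphism surjective on vertices and bijective from edges with origin $w$ (resp. terminus $w$) onto edges with origin $f(w)$ (resp. terminus $f(w)$) for each $w\in V_Y$. $\mathrm{Aut}(Y/X)$ is the group of digraph automorphisms $\sigma$ of $Y$ with $f\circ\sigma=f$; the cover is Galois if $X,Y$ are strongly connected and $\mathrm{Aut}(Y/X)$ acts transitively on each fibre $f^{-1}(v)$, and then $\mathrm{Gal}(Y/X)=\mathrm{Aut}(Y/X)$; it acts freely on $V_Y$. $\mathcal{A}_Y(w)=\sum_{o(\varepsilon)=w}t(\varepsilon)$; $g_Y(u)=\det(\mathcal{I}-\mathcal{A}_Yu)$, similarly $g_X$. $\gamma_{Y/X}(u)=\det_{\mathbb{Z}[G][u]}(\mathcal{I}-\mathcal{A}_Yu)$, computed on the free $\mathbb{Z}[G][u]$-module $\mathbb{Z}V_Y[u]$. $\widehat G(F)=\mathrm{Hom}(G,F^\times)$, $\psi_0$ the trivial character, and $g_{Y/X}(u,\psi)\in F[u]$ is obtained by applying $\psi$ to the coefficients of $\gamma_{Y/X}(u)$. *)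

theory Defs
  imports "HOL-Combinatorics.Permutations" "HOL-Computational_Algebra.Polynomial"
begin

definition digraph :: "'v set \<Rightarrow> 'e set \<Rightarrow> ('e \<Rightarrow> 'v) \<Rightarrow> ('e \<Rightarrow> 'v) \<Rightarrow> bool" where
  "digraph V E org t \<longleftrightarrow> (\<forall>e\<in>E. org e \<in> V \<and> t e \<in> V)"

definition strongly_connected :: "'v set \<Rightarrow> 'e set \<Rightarrow> ('e \<Rightarrow> 'v) \<Rightarrow> ('e \<Rightarrow> 'v) \<Rightarrow> bool" where
  "strongly_connected V E org t \<longleftrightarrow>
     (\<forall>v\<in>V. \<forall>w\<in>V. v \<noteq> w \<longrightarrow> (v, w) \<in> {(org e, t e) | e. e \<in> E}\<^sup>+)"

definition dg_morphism ::
  "'v set \<Rightarrow> 'e set \<Rightarrow> ('e \<Rightarrow> 'v) \<Rightarrow> ('e \<Rightarrow> 'v) \<Rightarrow>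
   'x set \<Rightarrow> 'd set \<Rightarrow> ('d \<Rightarrow> 'x) \<Rightarrow> ('d \<Rightarrow> 'x) \<Rightarrow> ('v \<Rightarrow> 'x) \<Rightarrow> ('e \<Rightarrow> 'd) \<Rightarrow> bool" where
  "dg_morphism VY EdY oY tY VX EdX oX tX fV fE \<longleftrightarrow>
     (\<forall>w\<in>VY. fV w \<in> VX) \<and>
     (\<forall>e\<in>EdY. fE e \<in> EdX \<and> oX (fE e) = fV (oY e) \<and> tX (fE e) = fV (tY e))"

definition is_cover ::
  "'v set \<Rightarrow> 'e set \<Rightarrow> ('e \<Rightarrow> 'v) \<Rightarrow> ('e \<Rightarrow> 'v) \<Rightarrow>
   'x set \<Rightarrow> 'd set \<Rightarrow> ('d \<Rightarrow> 'x) \<Rightarrow> ('d \<Rightarrow> 'x) \<Rightarrow> ('v \<Rightarrow> 'x) \<Rightarrow> ('e \<Rightarrow> 'd) \<Rightarrow> bool" where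
  "is_cover VY EdY oY tY VX EdX oX tX fV fE \<longleftrightarrow>
     dg_morphism VY EdY oY tY VX EdX oX tX fV fE \<and>
     fV ` VY = VX \<and>
     (\<forall>w\<in>VY. bij_betw fE {e\<in>EdY. oY e = w} {e\<in>EdX. oX e = fV w} \<and>
              bij_betw fE {e\<in>EdY. tY e = w} {e\<in>EdX. tX e = fV w})"

text \<open>A digraph automorphism is a pair (vertex map, edge map) of bijections
  compatible with incidence; outside the vertex/edge sets the maps are the
  identity (a normalisation making each automorphism a unique pair of functions).\<close>

definition dg_automorphism ::
  "'v set \<Rightarrow> 'e set \<Rightarrow> ('e \<Rightarrow> 'v) \<Rightarrow> ('e \<Rightarrow> 'v) \<Rightarrow> ('v \<Rightarrow> 'v) \<times> ('e \<Rightarrow> 'e) \<Rightarrow> bool" where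
  "dg_automorphism V E org t \<sigma> \<longleftrightarrow>
     bij_betw (fst \<sigma>) V V \<and> bij_betw (snd \<sigma>) E E \<and>
     (\<forall>e\<in>E. org (snd \<sigma> e) = fst \<sigma> (org e) \<and> t (snd \<sigma> e) = fst \<sigma> (t e)) \<and>
     (\<forall>x. x \<notin> V \<longrightarrow> fst \<sigma> x = x) \<and> (\<forall>x. x \<notin> E \<longrightarrow> snd \<sigma> x = x)"

definition Aut_cover ::
  "'v set \<Rightarrow> 'e set \<Rightarrow> ('e \<Rightarrow> 'v) \<Rightarrow> ('e \<Rightarrow> 'v) \<Rightarrow> ('v \<Rightarrow> 'x) \<Rightarrow> ('e \<Rightarrow> 'd)
   \<Rightarrow> (('v \<Rightarrow> 'v) \<times> ('e \<Rightarrow> 'e)) set" where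
  "Aut_cover VY EdY oY tY fV fE =
     {\<sigma>. dg_automorphism VY EdY oY tY \<sigma> \<and>
          (\<forall>w\<in>VY. fV (fst \<sigma> w) = fV w) \<and> (\<forall>e\<in>EdY. fE (snd \<sigma> e) = fE e)}"

definition aut_comp :: "('v \<Rightarrow> 'v) \<times> ('e \<Rightarrow> 'e) \<Rightarrow> ('v \<Rightarrow> 'v) \<times> ('e \<Rightarrow> 'e) \<Rightarrow> ('v \<Rightarrow> 'v) \<times> ('e \<Rightarrow> 'e)" where
  "aut_comp \<sigma> \<tau> = (fst \<sigma> \<circ> fst \<tau>, snd \<sigma> \<circ> snd \<tau>)"

definition galois_cover ::
  "'v set \<Rightarrow> 'e set \<Rightarrow> ('e \<Rightarrow> 'v) \<Rightarrow> ('e \<Rightarrow> 'v) \<Rightarrow>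
   'x set \<Rightarrow> 'd set \<Rightarrow> ('d \<Rightarrow> 'x) \<Rightarrow> ('d \<Rightarrow> 'x) \<Rightarrow> ('v \<Rightarrow> 'x) \<Rightarrow> ('e \<Rightarrow> 'd) \<Rightarrow> bool" where
  "galois_cover VY EdY oY tY VX EdX oX tX fV fE \<longleftrightarrow>
     is_cover VY EdY oY tY VX EdX oX tX fV fE \<and>
     strongly_connected VY EdY oY tY \<and> strongly_connected VX EdX oX tX \<and>
     (\<forall>w\<in>VY. \<forall>w'\<in>VY. fV w = fV w' \<longrightarrow>
        (\<exists>\<sigma>\<in>Aut_cover VY EdY oY tY fV fE. fst \<sigma> w = w'))"

definition characters :: "'g set \<Rightarrow> ('g \<Rightarrow> 'g \<Rightarrow> 'g) \<Rightarrow> ('g \<Rightarrow> 'f::field) set" where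
  "characters G gmul =
     {\<psi>. (\<forall>\<sigma>\<in>G. \<psi> \<sigma> \<noteq> 0) \<and> (\<forall>\<sigma>\<in>G. \<forall>\<tau>\<in>G. \<psi> (gmul \<sigma> \<tau>) = \<psi> \<sigma> * \<psi> \<tau>) \<and>
          (\<forall>\<sigma>. \<sigma> \<notin> G \<longrightarrow> \<psi> \<sigma> = 0)}"

definition trivial_character :: "'g set \<Rightarrow> ('g \<Rightarrow> 'f::field)" where
  "trivial_character G = (\<lambda>\<sigma>. if \<sigma> \<in> G then 1 else 0)"

definition det_on :: "'a set \<Rightarrow> ('a \<Rightarrow> 'a \<Rightarrow> 'r::comm_ring_1) \<Rightarrow> 'r" where
  "det_on V M = (\<Sum>p\<in>{p. p permutes V}. of_int (sign p) * (\<Prod>v\<in>V. M v (p v)))"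

definition adj_count :: "'e set \<Rightarrow> ('e \<Rightarrow> 'v) \<Rightarrow> ('e \<Rightarrow> 'v) \<Rightarrow> 'v \<Rightarrow> 'v \<Rightarrow> nat" where
  "adj_count E org t v w = card {e\<in>E. org e = v \<and> t e = w}"

definition g_dg :: "'v set \<Rightarrow> 'e set \<Rightarrow> ('e \<Rightarrow> 'v) \<Rightarrow> ('e \<Rightarrow> 'v) \<Rightarrow> 'r::comm_ring_1 poly" where
  "g_dg V E org t =
     det_on V (\<lambda>v w. (if v = w then 1 else 0) - [:0, of_nat (adj_count E org t v w):])"

text \<open>The twisted polynomial g_{Y/X}(u, psi): psi applied to the coefficients of
  det over Z[G][u] of (I - A_Y u) on the free Z[G][u]-module Z V_Y[u], computed
  in the basis given by a section s of f on vertices.  The matrix of A_Y over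
  Z[G] in this basis has (v,v')-entry  sum of sigma_eps over edges eps with
  o(eps) = s v and f(t eps) = v', where sigma_eps in G is the unique element with
  sigma_eps (s v') = t eps.  Since psi is a ring homomorphism Z[G] -> F, applying
  psi to the coefficients of the determinant is the determinant of the
  psi-image of the matrix.\<close>

definition vsection :: "'v set \<Rightarrow> ('v \<Rightarrow> 'x) \<Rightarrow> 'x \<Rightarrow> 'v" where
  "vsection VY fV v = (SOME w. w \<in> VY \<and> fV w = v)"

definition edge_elem ::
  "'v set \<Rightarrow> 'e set \<Rightarrow> ('e \<Rightarrow> 'v) \<Rightarrow> ('e \<Rightarrow> 'v) \<Rightarrow> ('v \<Rightarrow> 'x) \<Rightarrow> ('e \<Rightarrow> 'd) \<Rightarrow> 'e
   \<Rightarrow> ('v \<Rightarrow> 'v) \<times> ('e \<Rightarrow> 'e)" where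
  "edge_elem VY EdY oY tY fV fE \<epsilon> =
     (THE \<sigma>. \<sigma> \<in> Aut_cover VY EdY oY tY fV fE \<and> fst \<sigma> (vsection VY fV (fV (tY \<epsilon>))) = tY \<epsilon>)"

definition g_twisted ::
  "'v set \<Rightarrow> 'e set \<Rightarrow> ('e \<Rightarrow> 'v) \<Rightarrow> ('e \<Rightarrow> 'v) \<Rightarrow> 'x set \<Rightarrow> ('v \<Rightarrow> 'x) \<Rightarrow> ('e \<Rightarrow> 'd)
   \<Rightarrow> ((('v \<Rightarrow> 'v) \<times> ('e \<Rightarrow> 'e)) \<Rightarrow> 'f::field) \<Rightarrow> 'f poly" where
  "g_twisted VY EdY oY tY VX fV fE \<psi> =
     det_on VX (\<lambda>v v'. (if v = v' then 1 else 0) -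
        [:0, (\<Sum>\<epsilon>\<in>{\<epsilon>\<in>EdY. oY \<epsilon> = vsection VY fV v \<and> fV (tY \<epsilon>) = v'}.
                 \<psi> (edge_elem VY EdY oY tY fV fE \<epsilon>)):])"

end

theory Submission
  imports Defs "Jordan_Normal_Form.Char_Poly" "HOL-Algebra.Group"
begin

lemma det_on_reindex:
  assumes h: "bij_betw h W V" and fin: "finite W"
  shows "det_on V M = det_on W (\<lambda>a b. M (h a) (h b))"
proof -
  let ?m = "map_permutation W h"
  have hV: "h ` W = V" using h by (auto simp: bij_betw_def)
  have inj: "inj_on h W" using h by (auto simp: bij_betw_def)
  have m_eq: "?m = (\<lambda>\<pi> x. if x \<in> V then h (\<pi> (inv_into W h x)) else x)"
    by (auto simp: fun_eq_iff map_permutation_def restrict_id_def hV)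
  have bij: "bij_betw ?m {p. p permutes W} {p. p permutes V}"
    unfolding m_eq by (rule bij_betw_permutations[OF h])
  have "det_on V M = (\<Sum>p\<in>{p. p permutes W}. of_int (sign (?m p)) * (\<Prod>v\<in>V. M v (?m p v)))"
    unfolding det_on_def by (rule sum.reindex_bij_betw[OF bij, symmetric])
  also have "\<dots> = det_on W (\<lambda>a b. M (h a) (h b))"
    unfolding det_on_def
  proof (rule sum.cong[OF refl])
    fix p assume p: "p \<in> {p. p permutes W}"
    have s: "sign (?m p) = sign p" using sign_map_permutation[OF inj _ fin] p by auto
    have "(\<Prod>v\<in>V. M v (?m p v)) = (\<Prod>a\<in>W. M (h a) (?m p (h a)))"
      using prod.reindex[OF inj, of "\<lambda>v. M v (?m p v)"] hV by simp
    also have "\<dots> = (\<Prod>a\<in>W. M (h a) (h (p a)))"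
      by (rule prod.cong[OF refl]) (simp add: map_permutation_apply[OF inj])
    finally show "of_int (sign (?m p)) * (\<Prod>v\<in>V. M v (?m p v)) = of_int (sign p) * (\<Prod>a\<in>W. M (h a) (h (p a)))"
      using s by simp
  qed
  finally show ?thesis .
qed

lemma det_on_jnf:
  assumes e: "bij_betw e {0..<n} V"
  shows "det_on V M = det (mat n n (\<lambda>(i,j). M (e i) (e j)))"
proof -
  have "det_on V M = det_on {0..<n} (\<lambda>a b. M (e a) (e b))" by (rule det_on_reindex[OF e]) simp
  also have "\<dots> = det (mat n n (\<lambda>(i,j). M (e i) (e j)))"
    unfolding det_on_def det_def'[of "mat n n (\<lambda>(i,j). M (e i) (e j))" n, OF mat_carrier]
  proof (rule sum.cong[OF refl])
    fix p assume "p \<in> {p. p permutes {0..<n}}"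
    then have p: "p permutes {0..<n}" by simp
    have "\<And>i. i \<in> {0..<n} \<Longrightarrow> p i < n" using permutes_in_image[OF p] by auto
    then show "of_int (sign p) * (\<Prod>a = 0..<n. M (e a) (e (p a))) =
      of_int (sign p) * (\<Prod>i = 0..<n. mat n n (\<lambda>(i,j). M (e i) (e j)) $$ (i, p i))"
      by (auto intro!: prod.cong)
  qed
  finally show ?thesis .
qed

lemma det_on_mult:
  assumes fin: "finite V"
  shows "det_on V (\<lambda>a c. \<Sum>b\<in>V. A a b * B b c) = det_on V A * det_on V B"
proof -
  obtain e where e: "bij_betw e {0..<card V} V" using ex_bij_betw_nat_finite[OF fin] by blast
  let ?n = "card V"
  let ?A = "mat ?n ?n (\<lambda>(i,j). A (e i) (e j))"
  let ?B = "mat ?n ?n (\<lambda>(i,j). B (e i) (e j))"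
  have eq: "mat ?n ?n (\<lambda>(i,j). (\<Sum>b\<in>V. A (e i) b * B b (e j))) = ?A * ?B"
  proof (rule eq_matI)
    fix i j assume ij: "i < dim_row (?A * ?B)" "j < dim_col (?A * ?B)"
    then have i: "i < ?n" and j: "j < ?n" by auto
    have "(?A * ?B) $$ (i,j) = (\<Sum>k\<in>{0..<?n}. A (e i) (e k) * B (e k) (e j))"
      using i j by (simp add: scalar_prod_def)
    also have "\<dots> = (\<Sum>b\<in>V. A (e i) b * B b (e j))"
      using sum.reindex_bij_betw[OF e, of "\<lambda>b. A (e i) b * B b (e j)"] by simp
    finally show "mat ?n ?n (\<lambda>(i,j). (\<Sum>b\<in>V. A (e i) b * B b (e j))) $$ (i,j) = (?A * ?B) $$ (i,j)"
      using i j by simp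
  qed auto
  have "det_on V (\<lambda>a c. \<Sum>b\<in>V. A a b * B b c) = det (mat ?n ?n (\<lambda>(i,j). (\<Sum>b\<in>V. A (e i) b * B b (e j))))"
    by (rule det_on_jnf[OF e])
  also have "\<dots> = det ?A * det ?B" unfolding eq by (rule det_mult) auto
  also have "\<dots> = det_on V A * det_on V B" using det_on_jnf[OF e, of A] det_on_jnf[OF e, of B] by simp
  finally show ?thesis .
qed

lemma det_on_block:
  fixes M :: "'a \<Rightarrow> 'a \<Rightarrow> 'r::idom"
  assumes fS: "finite S" and fT: "finite T" and disj: "S \<inter> T = {}"
    and z: "\<And>a b. a \<in> S \<Longrightarrow> b \<in> T \<Longrightarrow> M a b = 0"
  shows "det_on (S \<union> T) M = det_on S M * det_on T M"
proof -
  obtain e1 where e1: "bij_betw e1 {0..<card S} S" using ex_bij_betw_nat_finite[OF fS] by blast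
  obtain e2 where e2: "bij_betw e2 {0..<card T} T" using ex_bij_betw_nat_finite[OF fT] by blast
  define n1 where "n1 = card S"
  define n2 where "n2 = card T"
  define e where "e = (\<lambda>i. if i < n1 then e1 i else e2 (i - n1))"
  have e: "bij_betw e {0..<n1+n2} (S \<union> T)"
  proof -
    have b1: "bij_betw e {0..<n1} S"
      using e1 unfolding n1_def by (rule bij_betw_cong[THEN iffD1, rotated]) (auto simp: e_def n1_def)
    have b2: "bij_betw (e2 \<circ> (\<lambda>i. i - n1)) {n1..<n1+n2} T"
    proof (rule bij_betw_trans[OF _ e2[folded n2_def]])
      show "bij_betw (\<lambda>i. i - n1) {n1..<n1 + n2} {0..<n2}"
        by (rule bij_betw_byWitness[of _ "\<lambda>i. i + n1"]) auto
    qed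
    have b3: "bij_betw e {n1..<n1+n2} T"
      using b2 by (rule bij_betw_cong[THEN iffD1, rotated]) (auto simp: e_def)
    have "bij_betw e ({0..<n1} \<union> {n1..<n1+n2}) (S \<union> T)"
      by (rule bij_betw_combine[OF b1 b3 disj]) 
    moreover have "{0..<n1} \<union> {n1..<n1+n2} = {0..<n1+n2}" by auto
    ultimately show ?thesis by simp
  qed
  let ?A1 = "mat n1 n1 (\<lambda>(i,j). M (e1 i) (e1 j))"
  let ?A4 = "mat n2 n2 (\<lambda>(i,j). M (e2 i) (e2 j))"
  let ?A3 = "mat n2 n1 (\<lambda>(i,j). M (e2 i) (e1 j))"
  have eq: "mat (n1+n2) (n1+n2) (\<lambda>(i,j). M (e i) (e j)) = four_block_mat ?A1 (0\<^sub>m n1 n2) ?A3 ?A4"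
  proof (rule eq_matI)
    fix i j assume "i < dim_row (four_block_mat ?A1 (0\<^sub>m n1 n2) ?A3 ?A4)"
      "j < dim_col (four_block_mat ?A1 (0\<^sub>m n1 n2) ?A3 ?A4)"
    then have i: "i < n1 + n2" and j: "j < n1 + n2" by auto
    have S1: "i < n1 \<Longrightarrow> e1 i \<in> S" using e1 unfolding n1_def[symmetric] by (auto simp: bij_betw_def)
    have T2: "\<not> j < n1 \<Longrightarrow> e2 (j - n1) \<in> T" using e2 j unfolding n2_def[symmetric] by (auto simp: bij_betw_def)
    show "mat (n1+n2) (n1+n2) (\<lambda>(i,j). M (e i) (e j)) $$ (i,j) = four_block_mat ?A1 (0\<^sub>m n1 n2) ?A3 ?A4 $$ (i,j)"
      using i j S1 T2 z by (auto simp: e_def)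
  qed auto
  have "det_on (S \<union> T) M = det (four_block_mat ?A1 (0\<^sub>m n1 n2) ?A3 ?A4)"
    using det_on_jnf[OF e, of M] eq by simp
  also have "\<dots> = det ?A1 * det ?A4"
    by (rule det_four_block_mat_upper_right_zero) auto
  also have "\<dots> = det_on S M * det_on T M"
    using det_on_jnf[OF e1, of M] det_on_jnf[OF e2, of M] unfolding n1_def n2_def by simp
  finally show ?thesis .
qed

lemma det_on_blockdiag:
  fixes N :: "'c \<Rightarrow> 'a \<Rightarrow> 'a \<Rightarrow> 'r::idom"
  assumes fS: "finite S" and fC: "finite C"
  shows "det_on (S \<times> C) (\<lambda>(a,x) (b,y). if x = y then N x a b else 0) = (\<Prod>x\<in>C. det_on S (N x))"
  using fC
proof (induction C rule: finite_induct)
  case empty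
  then show ?case by (simp add: det_on_def)
next
  case (insert c C)
  let ?M = "(\<lambda>(a,x) (b,y). if x = y then N x a b else 0)"
  have split: "S \<times> insert c C = (S \<times> {c}) \<union> (S \<times> C)" by auto
  have "det_on (S \<times> insert c C) ?M = det_on (S \<times> {c}) ?M * det_on (S \<times> C) ?M"
    unfolding split using insert fS by (intro det_on_block) auto
  also have "det_on (S \<times> {c}) ?M = det_on S (N c)"
  proof -
    have b: "bij_betw (\<lambda>a. (a, c)) S (S \<times> {c})" by (auto simp: bij_betw_def inj_on_def)
    show ?thesis using det_on_reindex[OF b fS, of ?M] by simp
  qed
  finally show ?case using insert by simp
qed

lemma det_on_diag:
  assumes "finite V"
  shows "det_on V (\<lambda>a b. if a = b then c else 0) = c ^ card V"
proof -
  have "det_on V (\<lambda>a b. if a = b then c else 0) = (\<Sum>p\<in>{id}. of_int (sign p) * (\<Prod>v\<in>V. (if v = p v then c else 0)))"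
    unfolding det_on_def
  proof (rule sum.mono_neutral_right)
    show "finite {p. p permutes V}" using assms by (rule finite_permutations)
    show "{id} \<subseteq> {p. p permutes V}" by (simp add: permutes_id)
    show "\<forall>p\<in>{p. p permutes V} - {id}. of_int (sign p) * (\<Prod>v\<in>V. (if v = p v then c else 0)) = 0"
    proof
      fix p assume p: "p \<in> {p. p permutes V} - {id}"
      then obtain v where "p v \<noteq> v" by (auto simp: fun_eq_iff)
      moreover have "v \<in> V" using p \<open>p v \<noteq> v\<close> by (auto simp: permutes_def)
      ultimately have "(\<Prod>v\<in>V. (if v = p v then c else 0)) = 0"
        using assms by (intro prod_zero) (auto intro!: bexI[of _ v])
      then show "of_int (sign p) * (\<Prod>v\<in>V. (if v = p v then c else 0)) = 0" by simp
    qed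
  qed
  then show ?thesis by simp
qed

lemma card_kth_roots:
  fixes a :: "'f::{alg_closed_field, field_char_0}"
  assumes k: "k > 0" and a: "a \<noteq> 0"
  shows "card {x. x ^ k = a} = k"
proof -
  define p where "p = monom (1::'f) k + [:-a:]"
  have deg: "degree p = k" using k unfolding p_def by (subst degree_add_eq_left) (auto simp: degree_monom_eq)
  have p0: "p \<noteq> 0" using deg k by auto
  have lc: "lead_coeff p = 1" using k unfolding p_def deg[unfolded p_def] by (cases k) (auto simp: coeff_monom)
  obtain A where A: "size A = degree p" "p = Polynomial.smult (lead_coeff p) (\<Prod>x\<in>#A. [:-x, 1:])"
    using alg_closed_imp_factorization[OF p0] by blast
  have pA: "p = (\<Prod>x\<in>#A. [:-x, 1:])" using A(2) lc by simp
  have "proots (\<Prod>x\<in>#A. [:-x, 1:]) = A"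
  proof (induction A)
    case (add y A)
    have nz: "(\<Prod>x\<in>#A. [:-x, 1:]) \<noteq> 0" by (auto simp: prod_mset_zero_iff)
    have "proots (\<Prod>x\<in>#add_mset y A. [:-x, 1:]) = proots ([:-y, 1:] * (\<Prod>x\<in>#A. [:-x, 1:]))"
      by simp
    also have "\<dots> = proots [:-y, 1:] + proots (\<Prod>x\<in>#A. [:-x, 1:])"
      using nz by (intro proots_mult) auto
    finally show ?case using add by simp
  qed simp
  then have prA: "proots p = A" using pA by simp
  have rsq: "rsquarefree p"
    unfolding rsquarefree_roots
  proof (intro allI notI)
    fix x assume h: "poly p x = 0 \<and> poly (pderiv p) x = 0"
    have "pderiv p = monom (of_nat k) (k - 1)"
      unfolding p_def by (simp add: pderiv_add pderiv_monom pderiv_pCons)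
    then have "of_nat k * x ^ (k - 1) = 0" using h by (simp add: poly_monom)
    then have "x ^ (k - 1) = 0" using k by simp
    then have x0: "x = 0 \<and> k > 1" using k by (cases "k = 1") auto
    have "poly p x = x ^ k + - a" unfolding p_def by (simp add: poly_monom)
    then show False using h x0 a by (auto simp: power_0_left)
  qed
  have cnt: "\<And>x. count A x \<le> 1"
  proof -
    fix x
    have "count A x = order x p" using prA p0 count_proots by metis
    then show "count A x \<le> 1" using rsq unfolding rsquarefree_def by (metis le_refl less_one less_or_eq_imp_le)
  qed
  have "size A = (\<Sum>x\<in>set_mset A. count A x)" by (rule size_multiset_overloaded_eq)
  also have "\<dots> = (\<Sum>x\<in>set_mset A. 1)"
    using cnt by (intro sum.cong) (auto simp: Suc_le_eq le_antisym)
  also have "\<dots> = card (set_mset A)" by simp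
  also have "set_mset A = {x. poly p x = 0}" using prA p0 set_count_proots by metis
  also have "\<dots> = {x. x ^ k = a}" unfolding p_def by (simp add: poly_monom)
  finally show ?thesis using A(1) deg by simp
qed

context comm_group
begin

lemma exists_pow_one:
  assumes fin: "finite (carrier G)" and g: "g \<in> carrier G"
  shows "\<exists>n::nat>0. g [^] n = \<one>"
proof -
  let ?A = "{0..card (carrier G)}"
  have "(\<lambda>i. g [^] i) ` ?A \<subseteq> carrier G" using g by auto
  then have "card ((\<lambda>i. g [^] i) ` ?A) \<le> card (carrier G)" using fin by (rule card_mono[rotated])
  then have "card ?A > card ((\<lambda>i. g [^] i) ` ?A)" by simp
  then have "\<not> inj_on (\<lambda>i. g [^] i) ?A" by (rule pigeonhole)
  then obtain i j where ij: "i \<in> ?A" "j \<in> ?A" "i \<noteq> j" "g [^] i = g [^] (j::nat)"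
    unfolding inj_on_def by blast
  have *: "\<exists>n::nat>0. g [^] n = \<one>" if "i < j" "g [^] i = g [^] (j::nat)" for i j
  proof -
    have "g [^] j = g [^] i \<otimes> g [^] (j - i)" using g that(1) by (simp add: nat_pow_mult)
    then have "g [^] i \<otimes> g [^] (j - i) = g [^] i" using that by simp
    then have "g [^] (j - i) = \<one>" using g by simp
    then show ?thesis using that(1) by (intro exI[of _ "j - i"]) auto
  qed
  show ?thesis
  proof (cases "i < j")
    case True then show ?thesis using * ij by blast
  next
    case False then have "j < i" using ij by simp
    then show ?thesis using * ij by metis
  qed
qed

lemma char_one:
  assumes H: "subgroup H G" and psi: "\<psi> \<in> characters H (mult G)"
  shows "\<psi> \<one> = (1::'f::field)"
proof -
  have o: "\<one> \<in> H" using H by (rule subgroup.one_closed)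
  have "\<psi> \<one> = \<psi> (\<one> \<otimes> \<one>)" by simp
  also have "\<dots> = \<psi> \<one> * \<psi> \<one>" using psi o unfolding characters_def by blast
  finally have "\<psi> \<one> * \<psi> \<one> = \<psi> \<one> * 1" by simp
  moreover have "\<psi> \<one> \<noteq> 0" using psi o unfolding characters_def by blast
  ultimately show ?thesis by (metis mult_left_cancel)
qed

lemma chars_trivial_group:
  "characters {\<one>} (mult G) = {trivial_character {\<one>} :: 'a \<Rightarrow> 'f::field}"
proof -
  have sg: "subgroup {\<one>} G" by (rule triv_subgroup)
  have "\<psi> = trivial_character {\<one>}" if "\<psi> \<in> characters {\<one>} (mult G)" for \<psi> :: "'a \<Rightarrow> 'f"
  proof
    fix x show "\<psi> x = trivial_character {\<one>} x"
      using char_one[OF sg that] that unfolding characters_def trivial_character_def by auto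
  qed
  moreover have "trivial_character {\<one>} \<in> characters {\<one>} (mult G)"
    unfolding characters_def trivial_character_def by auto
  ultimately show ?thesis by blast
qed

lemma ext_step:
  assumes fin: "finite (carrier G)" and H: "subgroup H G" and g: "g \<in> carrier G" "g \<notin> H"
    and IH: "card (characters H (mult G) :: ('a \<Rightarrow> 'f::{alg_closed_field, field_char_0}) set) = card H"
  shows "\<exists>H'. subgroup H' G \<and> card H < card H' \<and>
           card (characters H' (mult G) :: ('a \<Rightarrow> 'f) set) = card H'"
proof -
  have Hc: "H \<subseteq> carrier G" using H by (rule subgroup.subset)
  have finH: "finite H" using Hc fin finite_subset by blast
  have oneH: "\<one> \<in> H" using H by (rule subgroup.one_closed)
  have mH: "\<And>a b. a \<in> H \<Longrightarrow> b \<in> H \<Longrightarrow> a \<otimes> b \<in> H" using H by (rule subgroup.m_closed)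
  have iH: "\<And>a. a \<in> H \<Longrightarrow> inv a \<in> H" using H by (rule subgroup.m_inv_closed)
  have cH: "\<And>a. a \<in> H \<Longrightarrow> a \<in> carrier G" using Hc by blast
  obtain n :: nat where n: "n > 0" "g [^] n = \<one>" using exists_pow_one[OF fin g(1)] by blast
  have ex: "\<exists>i::nat. 0 < i \<and> g [^] i \<in> H" using n oneH by auto
  define k where "k = (LEAST i::nat. 0 < i \<and> g [^] i \<in> H)"
  have k: "0 < k" "g [^] k \<in> H" using LeastI_ex[OF ex] unfolding k_def by auto
  have kmin: "\<And>i. 0 < i \<Longrightarrow> i < k \<Longrightarrow> g [^] i \<notin> H"
    using not_less_Least unfolding k_def by blast
  have k1: "k \<noteq> 1" using k g by auto
  define f where "f = (\<lambda>(h,i). h \<otimes> g [^] (i::nat))"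
  define H' where "H' = f ` (H \<times> {..<k})"
  have uniq: "i = j \<and> h1 = h2"
    if h: "h1 \<in> H" "h2 \<in> H" "i \<le> j" "j < k" "h1 \<otimes> g [^] i = h2 \<otimes> g [^] j" for h1 h2 and i j :: nat
  proof -
    have "g [^] j = g [^] (j - i) \<otimes> g [^] i" using g h(3) by (simp add: nat_pow_mult)
    then have "h1 \<otimes> g [^] i = (h2 \<otimes> g [^] (j - i)) \<otimes> g [^] i"
      using h g cH by (simp add: m_assoc)
    then have e: "h1 = h2 \<otimes> g [^] (j - i)" using h g cH by simp
    then have "g [^] (j - i) = inv h2 \<otimes> h1" using h g cH by (simp add: m_assoc[symmetric])
    then have "g [^] (j - i) \<in> H" using h iH mH by simp
    then have "j - i = 0" using kmin[of "j - i"] h by linarith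
    then show ?thesis using e h g cH by simp
  qed
  have inj: "inj_on f (H \<times> {..<k})"
  proof (rule inj_onI)
    fix x y assume x: "x \<in> H \<times> {..<k}" and y: "y \<in> H \<times> {..<k}" and e0: "f x = f y"
    obtain h1 i where xi: "x = (h1, i)" by (cases x)
    obtain h2 j where yj: "y = (h2, j)" by (cases y)
    have a: "h1 \<in> H" "i < k" "h2 \<in> H" "j < k" using x y xi yj by auto
    have e: "h1 \<otimes> g [^] i = h2 \<otimes> g [^] j" using e0 xi yj unfolding f_def by simp
    show "x = y"
    proof (cases "i \<le> j")
      case True then show ?thesis using uniq[OF a(1) a(3) True a(4) e] xi yj by auto
    next
      case False then show ?thesis using uniq[OF a(3) a(1) _ a(2) e[symmetric]] xi yj by auto
    qed
  qed
  have cardH': "card H' = card H * k"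
    unfolding H'_def using card_image[OF inj] finH by (simp add: card_cartesian_product)
  have mem0: "\<forall>h\<in>H. h \<otimes> g [^] m \<in> H'" for m :: nat
  proof (induction m rule: less_induct)
    case (less m)
    show ?case
    proof
      fix h assume h: "h \<in> H"
      show "h \<otimes> g [^] m \<in> H'"
      proof (cases "m < k")
        case True then show ?thesis unfolding H'_def f_def using h by force
      next
        case False
        have "g [^] m = g [^] k \<otimes> g [^] (m - k)" using g False by (simp add: nat_pow_mult)
        then have "h \<otimes> g [^] m = (h \<otimes> g [^] k) \<otimes> g [^] (m - k)" using g h cH by (simp add: m_assoc)
        moreover have "h \<otimes> g [^] k \<in> H" using mH h k by blast
        ultimately show ?thesis using less.IH[of "m - k"] k False by simp
      qed
    qed
  qed
  have mem: "\<And>h m. h \<in> H \<Longrightarrow> h \<otimes> g [^] (m::nat) \<in> H'" using mem0 by blast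
  have H'c: "H' \<subseteq> carrier G" unfolding H'_def f_def using g cH by auto
  have H'sub: "subgroup H' G"
  proof (rule subgroupI)
    show "H' \<subseteq> carrier G" by (rule H'c)
    show "H' \<noteq> {}" unfolding H'_def using oneH k by auto
  next
    fix a assume "a \<in> H'"
    then obtain h i where hi: "h \<in> H" "a = h \<otimes> g [^] (i::nat)" unfolding H'_def f_def by auto
    have "g [^] (n * i - i) \<otimes> g [^] i = g [^] (n * i)"
      using g n by (simp add: nat_pow_mult)
    also have "\<dots> = \<one>" using g n by (simp add: nat_pow_pow[symmetric])
    finally have "inv (g [^] i) = g [^] (n * i - i)" using g by (simp add: inv_equality)
    then have "inv a = inv h \<otimes> g [^] (n * i - i)" using hi g cH by (simp add: inv_mult)
    then show "inv a \<in> H'" using mem iH hi by simp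
  next
    fix a b assume "a \<in> H'" "b \<in> H'"
    then obtain h1 i h2 j where hi: "h1 \<in> H" "a = h1 \<otimes> g [^] (i::nat)" "h2 \<in> H" "b = h2 \<otimes> g [^] (j::nat)"
      unfolding H'_def f_def by auto
    have "a \<otimes> b = (h1 \<otimes> h2) \<otimes> (g [^] i \<otimes> g [^] j)" using hi g cH by (simp add: m_ac)
    also have "\<dots> = (h1 \<otimes> h2) \<otimes> g [^] (i + j)" using g by (simp add: nat_pow_mult)
    finally show "a \<otimes> b \<in> H'" using mem mH hi by simp
  qed
  have cardlt: "card H < card H'"
  proof -
    have "card H > 0" using finH oneH card_gt_0_iff by blast
    moreover have "k \<ge> 2" using k k1 by linarith
    ultimately show ?thesis unfolding cardH' by simp
  qed
  let ?C = "\<lambda>H. characters H (mult G) :: ('a \<Rightarrow> 'f) set"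
  define R where "R = (\<lambda>\<chi>::'a\<Rightarrow>'f. {lam. lam ^ k = \<chi> (g [^] k)})"
  define \<Phi> where "\<Phi> = (\<lambda>\<psi>::'a\<Rightarrow>'f. ((\<lambda>x. if x \<in> H then \<psi> x else 0), \<psi> g))"
  have HH': "H \<subseteq> H'" using mem[of _ 0] cH by auto
  have gpow: "g [^] (i::nat) \<in> H'" for i using mem[OF oneH, of i] g by simp
  have gH': "g \<in> H'" using gpow[of 1] g by simp
  have P1: "\<psi> (g [^] i) = \<psi> g ^ i" if psi: "\<psi> \<in> ?C H'" for \<psi> i
  proof (induction i)
    case 0 show ?case using char_one[OF H'sub psi] by simp
  next
    case (Suc i)
    have "\<psi> (g [^] Suc i) = \<psi> (g [^] i \<otimes> g)" by simp
    also have "\<dots> = \<psi> (g [^] i) * \<psi> g" using psi gpow gH' unfolding characters_def by blast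
    finally show ?case using Suc by simp
  qed
  have P2: "\<psi> (h \<otimes> g [^] i) = \<psi> h * \<psi> g ^ i" if psi: "\<psi> \<in> ?C H'" and h: "h \<in> H" for \<psi> h i
    using psi gpow[of i] HH' h P1[OF psi] unfolding characters_def by auto
  have inj\<Phi>: "inj_on \<Phi> (?C H')"
  proof (rule inj_onI)
    fix \<psi>1 \<psi>2 assume p1: "\<psi>1 \<in> ?C H'" and p2: "\<psi>2 \<in> ?C H'" and e: "\<Phi> \<psi>1 = \<Phi> \<psi>2"
    have eH: "\<And>x. x \<in> H \<Longrightarrow> \<psi>1 x = \<psi>2 x" and eg: "\<psi>1 g = \<psi>2 g"
      using e unfolding \<Phi>_def by (auto simp: fun_eq_iff split: if_splits; metis)+
    show "\<psi>1 = \<psi>2"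
    proof
      fix x show "\<psi>1 x = \<psi>2 x"
      proof (cases "x \<in> H'")
        case True
        then obtain h i where hi: "h \<in> H" "x = h \<otimes> g [^] (i::nat)" unfolding H'_def f_def by auto
        show ?thesis using P2[OF p1 hi(1)] P2[OF p2 hi(1)] eH[OF hi(1)] eg hi(2) by simp
      next
        case False then show ?thesis using p1 p2 unfolding characters_def by auto
      qed
    qed
  qed
  have im1: "\<Phi> \<psi> \<in> Sigma (?C H) R" if psi: "\<psi> \<in> ?C H'" for \<psi>
  proof -
    have "(\<lambda>x. if x \<in> H then \<psi> x else 0) \<in> ?C H"
      using psi HH' mH unfolding characters_def by (auto simp: subset_iff)
    moreover have "\<psi> g ^ k = \<psi> (g [^] k)" using P1[OF psi] by simp
    ultimately show ?thesis unfolding \<Phi>_def R_def using k by simp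
  qed
  have im2: "p \<in> \<Phi> ` ?C H'" if p: "p \<in> Sigma (?C H) R" for p
  proof -
    obtain \<chi> lam where pc: "p = (\<chi>, lam)" "\<chi> \<in> ?C H" "lam ^ k = \<chi> (g [^] k)"
      using p unfolding R_def by auto
    have chi_nz: "\<And>h. h \<in> H \<Longrightarrow> \<chi> h \<noteq> 0" and chi_m: "\<And>a b. a \<in> H \<Longrightarrow> b \<in> H \<Longrightarrow> \<chi> (a \<otimes> b) = \<chi> a * \<chi> b"
      and chi_z: "\<And>x. x \<notin> H \<Longrightarrow> \<chi> x = 0"
      using pc(2) unfolding characters_def by auto
    have lam_nz: "lam \<noteq> 0" using pc(3) chi_nz[OF k(2)] k(1) by (auto simp: power_0_left)
    define dec where "dec = inv_into (H \<times> {..<k}) f"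
    define \<psi> where "\<psi> = (\<lambda>x. if x \<in> H' then \<chi> (fst (dec x)) * lam ^ snd (dec x) else 0)"
    have Q1: "\<psi> (h \<otimes> g [^] i) = \<chi> h * lam ^ i" if "h \<in> H" "i < k" for h i
    proof -
      have "h \<otimes> g [^] i = f (h, i)" unfolding f_def by simp
      moreover have "f (h, i) \<in> H'" unfolding H'_def using that by auto
      moreover have "dec (f (h, i)) = (h, i)" unfolding dec_def using inv_into_f_f[OF inj] that by auto
      ultimately show ?thesis unfolding \<psi>_def by simp
    qed
    have Q2: "\<forall>h\<in>H. \<psi> (h \<otimes> g [^] m) = \<chi> h * lam ^ m" for m :: nat
    proof (induction m rule: less_induct)
      case (less m)
      show ?case
      proof
        fix h assume h: "h \<in> H"
        show "\<psi> (h \<otimes> g [^] m) = \<chi> h * lam ^ m"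
        proof (cases "m < k")
          case True then show ?thesis using Q1 h by simp
        next
          case False
          have "g [^] m = g [^] k \<otimes> g [^] (m - k)" using g False by (simp add: nat_pow_mult)
          then have "h \<otimes> g [^] m = (h \<otimes> g [^] k) \<otimes> g [^] (m - k)" using g h cH by (simp add: m_assoc)
          moreover have hk: "h \<otimes> g [^] k \<in> H" using mH h k by blast
          ultimately have "\<psi> (h \<otimes> g [^] m) = \<chi> (h \<otimes> g [^] k) * lam ^ (m - k)"
            using less.IH[of "m - k"] k False by simp
          also have "\<dots> = \<chi> h * lam ^ k * lam ^ (m - k)" using chi_m[OF h k(2)] pc(3) by simp
          also have "\<dots> = \<chi> h * lam ^ m" using False by (simp add: power_add[symmetric] mult.assoc)
          finally show ?thesis .
        qed
      qed
    qed
    have psiC: "\<psi> \<in> ?C H'"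
      unfolding characters_def
    proof (intro CollectI conjI ballI allI impI)
      fix x assume "x \<in> H'"
      then obtain h i where hi: "h \<in> H" "x = h \<otimes> g [^] (i::nat)" unfolding H'_def f_def by auto
      show "\<psi> x \<noteq> 0" using Q2 hi chi_nz lam_nz by simp
    next
      fix x y assume "x \<in> H'" "y \<in> H'"
      then obtain h1 i h2 j where hi: "h1 \<in> H" "x = h1 \<otimes> g [^] (i::nat)" "h2 \<in> H" "y = h2 \<otimes> g [^] (j::nat)"
        unfolding H'_def f_def by auto
      have "x \<otimes> y = (h1 \<otimes> h2) \<otimes> (g [^] i \<otimes> g [^] j)" using hi g cH by (simp add: m_ac)
      also have "\<dots> = (h1 \<otimes> h2) \<otimes> g [^] (i + j)" using g by (simp add: nat_pow_mult)
      finally have "\<psi> (x \<otimes> y) = \<chi> (h1 \<otimes> h2) * lam ^ (i + j)" using Q2 mH hi by simp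
      also have "\<dots> = (\<chi> h1 * lam ^ i) * (\<chi> h2 * lam ^ j)" using chi_m hi by (simp add: power_add)
      also have "\<dots> = \<psi> x * \<psi> y" using Q2 hi by simp
      finally show "\<psi> (x \<otimes> y) = \<psi> x * \<psi> y" .
    next
      fix x assume "x \<notin> H'" then show "\<psi> x = 0" unfolding \<psi>_def by simp
    qed
    have "\<Phi> \<psi> = (\<chi>, lam)"
    proof -
      have "(\<lambda>x. if x \<in> H then \<psi> x else 0) = \<chi>"
      proof
        fix x show "(if x \<in> H then \<psi> x else 0) = \<chi> x"
        proof (cases "x \<in> H")
          case True then show ?thesis using Q2[of 0] cH by force
        next
          case False then show ?thesis using chi_z by simp
        qed
      qed
      moreover have "\<psi> g = lam" using Q2[of 1] oneH char_one[OF H pc(2)] g by force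
      ultimately show ?thesis unfolding \<Phi>_def by simp
    qed
    then show ?thesis using psiC pc(1) by (metis image_eqI)
  qed
  have bij: "bij_betw \<Phi> (?C H') (Sigma (?C H) R)"
    unfolding bij_betw_def using inj\<Phi> im1 im2 by blast
  have finC: "finite (?C H)" using IH finH oneH card_gt_0_iff by (metis empty_iff)
  have cardR: "card (R \<chi>) = k" if "\<chi> \<in> ?C H" for \<chi>
  proof -
    have "\<chi> (g [^] k) \<noteq> 0" using that k(2) unfolding characters_def by auto
    then show ?thesis unfolding R_def using card_kth_roots k(1) by blast
  qed
  have finR: "finite (R \<chi>)" if "\<chi> \<in> ?C H" for \<chi> using cardR[OF that] k(1) card_ge_0_finite by force
  have "card (?C H') = card (Sigma (?C H) R)" using bij by (rule bij_betw_same_card)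
  also have "\<dots> = (\<Sum>\<chi>\<in>?C H. card (R \<chi>))" using finC finR by simp
  also have "\<dots> = card (?C H) * k" using cardR by simp
  also have "\<dots> = card H'" using IH cardH' by simp
  finally show ?thesis using H'sub cardlt by blast
qed

lemma chars_count:
  assumes fin: "finite (carrier G)"
  shows "card (characters (carrier G) (mult G) :: ('a \<Rightarrow> 'f::{alg_closed_field, field_char_0}) set) = card (carrier G)"
proof -
  let ?C = "\<lambda>H. characters H (mult G) :: ('a \<Rightarrow> 'f) set"
  have main: "n \<le> card (carrier G) \<Longrightarrow> (\<exists>H. subgroup H G \<and> n \<le> card H \<and> card (?C H) = card H)" for n
  proof (induction n)
    case 0
    show ?case using triv_subgroup chars_trivial_group[where 'f = 'f] by (intro exI[of _ "{\<one>}"]) auto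
  next
    case (Suc n)
    then obtain H where H: "subgroup H G" "n \<le> card H" "card (?C H) = card H" by auto
    show ?case
    proof (cases "Suc n \<le> card H")
      case True then show ?thesis using H by blast
    next
      case False
      then have "card H < card (carrier G)" using Suc.prems H(2) by simp
      moreover have "H \<subseteq> carrier G" using H(1) by (rule subgroup.subset)
      ultimately have "H \<noteq> carrier G" by auto
      then obtain g where g: "g \<in> carrier G" "g \<notin> H" using \<open>H \<subseteq> carrier G\<close> by blast
      obtain H' where "subgroup H' G" "card H < card H'" "card (?C H') = card H'"
        using ext_step[OF fin H(1) g H(3)] by blast
      then show ?thesis using H(2) by (intro exI[of _ H']) auto
    qed
  qed
  obtain H where H: "subgroup H G" "card (carrier G) \<le> card H" "card (?C H) = card H"
    using main[of "card (carrier G)"] by auto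
  have "H \<subseteq> carrier G" using H(1) by (rule subgroup.subset)
  then have "H = carrier G" using H(2) fin by (metis card_seteq)
  then show ?thesis using H(3) by simp
qed

lemma char_sum_zero:
  assumes fin: "finite (carrier G)" and psi: "\<psi> \<in> characters (carrier G) (mult G)"
    and nt: "\<psi> \<noteq> trivial_character (carrier G)"
  shows "(\<Sum>x\<in>carrier G. \<psi> x) = (0::'f::field)"
proof -
  have "\<exists>t\<in>carrier G. \<psi> t \<noteq> 1"
  proof (rule ccontr)
    assume "\<not> ?thesis"
    then have "\<psi> = trivial_character (carrier G)"
      using psi unfolding characters_def trivial_character_def by (auto simp: fun_eq_iff)
    then show False using nt by simp
  qed
  then obtain t where t: "t \<in> carrier G" "\<psi> t \<noteq> 1" by blast
  have bij: "bij_betw (\<lambda>x. t \<otimes> x) (carrier G) (carrier G)"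
    by (rule bij_betw_byWitness[of _ "\<lambda>x. inv t \<otimes> x"]) (use t in \<open>auto simp: m_assoc[symmetric]\<close>)
  have "(\<Sum>x\<in>carrier G. \<psi> x) = (\<Sum>x\<in>carrier G. \<psi> (t \<otimes> x))"
    using sum.reindex_bij_betw[OF bij, of \<psi>] by simp
  also have "\<dots> = (\<Sum>x\<in>carrier G. \<psi> t * \<psi> x)"
    using psi t unfolding characters_def by (intro sum.cong) auto
  also have "\<dots> = \<psi> t * (\<Sum>x\<in>carrier G. \<psi> x)" by (simp add: sum_distrib_left)
  finally have "(1 - \<psi> t) * (\<Sum>x\<in>carrier G. \<psi> x) = 0" by (simp add: algebra_simps)
  then show ?thesis using t(2) by simp
qed

lemma char_orth:
  assumes fin: "finite (carrier G)" and phi: "\<phi> \<in> characters (carrier G) (mult G)"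
    and psi: "\<psi> \<in> characters (carrier G) (mult G)"
  shows "(\<Sum>x\<in>carrier G. inverse (\<phi> x) * \<psi> x) = (if \<phi> = \<psi> then of_nat (card (carrier G)) else (0::'f::field))"
proof (cases "\<phi> = \<psi>")
  case True
  then show ?thesis using phi unfolding characters_def by simp
next
  case False
  define \<chi> where "\<chi> = (\<lambda>x. if x \<in> carrier G then inverse (\<phi> x) * \<psi> x else 0)"
  have chiC: "\<chi> \<in> characters (carrier G) (mult G)"
    using phi psi unfolding characters_def \<chi>_def by auto
  have "\<chi> \<noteq> trivial_character (carrier G)"
  proof
    assume a: "\<chi> = trivial_character (carrier G)"
    have "\<phi> = \<psi>"
    proof
      fix x show "\<phi> x = \<psi> x"
      proof (cases "x \<in> carrier G")
        case True
        then have "inverse (\<phi> x) * \<psi> x = 1" using a unfolding \<chi>_def trivial_character_def by (metis (mono_tags))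
        moreover have "\<phi> x \<noteq> 0" using phi True unfolding characters_def by auto
        ultimately show ?thesis by (simp add: field_simps)
      next
        case False then show ?thesis using phi psi unfolding characters_def by auto
      qed
    qed
    then show False using \<open>\<phi> \<noteq> \<psi>\<close> by simp
  qed
  then have "(\<Sum>x\<in>carrier G. \<chi> x) = 0" using char_sum_zero[OF fin chiC] by simp
  then show ?thesis using False unfolding \<chi>_def by simp
qed

end

locale gcov =
  fixes VY :: "'v set" and EdY :: "'e set" and oY tY :: "'e \<Rightarrow> 'v"
    and VX :: "'x set" and EdX :: "'d set" and oX tX :: "'d \<Rightarrow> 'x"
    and fV :: "'v \<Rightarrow> 'x" and fE :: "'e \<Rightarrow> 'd"
  assumes finVY: "finite VY" and finEY: "finite EdY" and dgY: "digraph VY EdY oY tY"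
    and finVX: "finite VX" and finEX: "finite EdX" and dgX: "digraph VX EdX oX tX"
    and gal: "galois_cover VY EdY oY tY VX EdX oX tX fV fE"
    and ab: "\<forall>\<sigma>\<in>Aut_cover VY EdY oY tY fV fE. \<forall>\<tau>\<in>Aut_cover VY EdY oY tY fV fE.
           aut_comp \<sigma> \<tau> = aut_comp \<tau> \<sigma>"
begin

abbreviation "GA \<equiv> Aut_cover VY EdY oY tY fV fE"

definition Gr :: "(('v \<Rightarrow> 'v) \<times> ('e \<Rightarrow> 'e)) monoid" where
  "Gr = \<lparr>carrier = GA, mult = aut_comp, one = (id, id)\<rparr>"

lemma cov: "is_cover VY EdY oY tY VX EdX oX tX fV fE" using gal unfolding galois_cover_def by auto
lemma scY: "strongly_connected VY EdY oY tY" using gal unfolding galois_cover_def by auto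
lemma trans_fib: "w \<in> VY \<Longrightarrow> w' \<in> VY \<Longrightarrow> fV w = fV w' \<Longrightarrow> \<exists>\<sigma>\<in>GA. fst \<sigma> w = w'"
  using gal unfolding galois_cover_def by auto
lemma fVY: "fV ` VY = VX" using cov unfolding is_cover_def by auto
lemma eY: "e \<in> EdY \<Longrightarrow> oY e \<in> VY \<and> tY e \<in> VY" using dgY unfolding digraph_def by auto
lemma fE_out: "w \<in> VY \<Longrightarrow> bij_betw fE {e\<in>EdY. oY e = w} {e\<in>EdX. oX e = fV w}"
  using cov unfolding is_cover_def by auto
lemma fE_mor: "e \<in> EdY \<Longrightarrow> fE e \<in> EdX \<and> oX (fE e) = fV (oY e) \<and> tX (fE e) = fV (tY e)"
  using cov unfolding is_cover_def dg_morphism_def by auto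

lemma GA_D:
  assumes "\<sigma> \<in> GA"
  shows "bij_betw (fst \<sigma>) VY VY" "bij_betw (snd \<sigma>) EdY EdY"
    "\<And>e. e \<in> EdY \<Longrightarrow> oY (snd \<sigma> e) = fst \<sigma> (oY e) \<and> tY (snd \<sigma> e) = fst \<sigma> (tY e)"
    "\<And>x. x \<notin> VY \<Longrightarrow> fst \<sigma> x = x" "\<And>x. x \<notin> EdY \<Longrightarrow> snd \<sigma> x = x"
    "\<And>w. w \<in> VY \<Longrightarrow> fV (fst \<sigma> w) = fV w" "\<And>e. e \<in> EdY \<Longrightarrow> fE (snd \<sigma> e) = fE e"
  using assms unfolding Aut_cover_def dg_automorphism_def by auto

lemma GA_in: "\<sigma> \<in> GA \<Longrightarrow> w \<in> VY \<Longrightarrow> fst \<sigma> w \<in> VY"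
  using GA_D(1) bij_betwE by blast
lemma GA_inE: "\<sigma> \<in> GA \<Longrightarrow> e \<in> EdY \<Longrightarrow> snd \<sigma> e \<in> EdY"
  using GA_D(2) bij_betwE by blast

lemma id_GA: "(id, id) \<in> GA"
  unfolding Aut_cover_def dg_automorphism_def by auto

lemma comp_GA:
  assumes s: "\<sigma> \<in> GA" and t: "\<tau> \<in> GA"
  shows "aut_comp \<sigma> \<tau> \<in> GA"
proof -
  have b1: "bij_betw (fst \<sigma> \<circ> fst \<tau>) VY VY" using bij_betw_trans[OF GA_D(1)[OF t] GA_D(1)[OF s]] .
  have b2: "bij_betw (snd \<sigma> \<circ> snd \<tau>) EdY EdY" using bij_betw_trans[OF GA_D(2)[OF t] GA_D(2)[OF s]] .
  show ?thesis
    unfolding Aut_cover_def dg_automorphism_def aut_comp_def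
    using b1 b2 GA_D(3)[OF s] GA_D(3)[OF t] GA_inE[OF t] GA_in[OF t] GA_D(4-7)[OF s] GA_D(4-7)[OF t]
    by simp
qed

lemma inv_GA:
  assumes s: "\<sigma> \<in> GA"
  shows "\<exists>\<tau>\<in>GA. aut_comp \<tau> \<sigma> = (id, id)"
proof -
  define a where "a = fst \<sigma>"
  define b where "b = snd \<sigma>"
  define a' where "a' = (\<lambda>x. if x \<in> VY then inv_into VY a x else x)"
  define b' where "b' = (\<lambda>x. if x \<in> EdY then inv_into EdY b x else x)"
  have ba: "bij_betw a VY VY" and bb: "bij_betw b EdY EdY" using GA_D[OF s] unfolding a_def b_def by auto
  have ba': "bij_betw a' VY VY"
    using bij_betw_inv_into[OF ba] unfolding a'_def by (rule bij_betw_cong[THEN iffD1, rotated]) auto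
  have bb': "bij_betw b' EdY EdY"
    using bij_betw_inv_into[OF bb] unfolding b'_def by (rule bij_betw_cong[THEN iffD1, rotated]) auto
  have a'a: "a' (a x) = x" for x
  proof (cases "x \<in> VY")
    case True then show ?thesis using ba unfolding a'_def by (auto simp: bij_betw_def inv_into_f_f bij_betwE)
  next
    case False then show ?thesis using GA_D(4)[OF s] unfolding a'_def a_def by auto
  qed
  have b'b: "b' (b x) = x" for x
  proof (cases "x \<in> EdY")
    case True then show ?thesis using bb unfolding b'_def by (auto simp: bij_betw_def inv_into_f_f bij_betwE)
  next
    case False then show ?thesis using GA_D(5)[OF s] unfolding b'_def b_def by auto
  qed
  have bb'e: "b (b' e) = e" if "e \<in> EdY" for e
    using that bb unfolding b'_def by (auto simp: bij_betw_def f_inv_into_f)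
  have aa'w: "a (a' w) = w" if "w \<in> VY" for w
    using that ba unfolding a'_def by (auto simp: bij_betw_def f_inv_into_f)
  have b'E: "b' e \<in> EdY" if "e \<in> EdY" for e using bb' that bij_betwE by blast
  have a'V: "a' w \<in> VY" if "w \<in> VY" for w using ba' that bij_betwE by blast
  have inc: "oY (b' e) = a' (oY e) \<and> tY (b' e) = a' (tY e)" if e: "e \<in> EdY" for e
  proof -
    have "oY e = oY (b (b' e))" using bb'e[OF e] by auto
    also have "oY (b (b' e)) = a (oY (b' e))"
      using GA_D(3)[OF s b'E[OF e]] unfolding a_def b_def by auto
    finally have 1: "oY (b' e) = a' (oY e)" using a'a by simp
    have "tY e = tY (b (b' e))" using bb'e[OF e] by auto
    also have "tY (b (b' e)) = a (tY (b' e))"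
      using GA_D(3)[OF s b'E[OF e]] unfolding a_def b_def by auto
    finally have 2: "tY (b' e) = a' (tY e)" using a'a by simp
    show ?thesis using 1 2 by simp
  qed
  have "(a', b') \<in> GA"
    unfolding Aut_cover_def dg_automorphism_def
  proof (simp, intro conjI ballI allI impI)
    show "bij_betw a' VY VY" by (rule ba')
    show "bij_betw b' EdY EdY" by (rule bb')
    fix e assume e: "e \<in> EdY"
    show "oY (b' e) = a' (oY e)" "tY (b' e) = a' (tY e)" using inc[OF e] by auto
    show "fE (b' e) = fE e" using GA_D(7)[OF s b'E[OF e]] bb'e[OF e] unfolding b_def by simp
  next
    fix x assume "x \<notin> VY" then show "a' x = x" unfolding a'_def by simp
  next
    fix x assume "x \<notin> EdY" then show "b' x = x" unfolding b'_def by simp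
  next
    fix w assume w: "w \<in> VY"
    show "fV (a' w) = fV w" using GA_D(6)[OF s a'V[OF w]] aa'w[OF w] unfolding a_def by simp
  qed
  moreover have "aut_comp (a', b') \<sigma> = (id, id)"
    unfolding aut_comp_def using a'a b'b by (auto simp: a_def b_def fun_eq_iff)
  ultimately show ?thesis by blast
qed

lemma Gr_comm_group: "comm_group Gr"
proof (rule comm_groupI)
  show "\<And>x y. x \<in> carrier Gr \<Longrightarrow> y \<in> carrier Gr \<Longrightarrow> x \<otimes>\<^bsub>Gr\<^esub> y \<in> carrier Gr"
    unfolding Gr_def using comp_GA by simp
  show "\<one>\<^bsub>Gr\<^esub> \<in> carrier Gr" unfolding Gr_def using id_GA by simp
  show "\<And>x y z. x \<in> carrier Gr \<Longrightarrow> y \<in> carrier Gr \<Longrightarrow> z \<in> carrier Gr \<Longrightarrow>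
    x \<otimes>\<^bsub>Gr\<^esub> y \<otimes>\<^bsub>Gr\<^esub> z = x \<otimes>\<^bsub>Gr\<^esub> (y \<otimes>\<^bsub>Gr\<^esub> z)"
    unfolding Gr_def aut_comp_def by (simp add: o_assoc)
  show "\<And>x y. x \<in> carrier Gr \<Longrightarrow> y \<in> carrier Gr \<Longrightarrow> x \<otimes>\<^bsub>Gr\<^esub> y = y \<otimes>\<^bsub>Gr\<^esub> x"
    unfolding Gr_def using ab by simp
  show "\<And>x. x \<in> carrier Gr \<Longrightarrow> \<one>\<^bsub>Gr\<^esub> \<otimes>\<^bsub>Gr\<^esub> x = x"
    unfolding Gr_def aut_comp_def by simp
  show "\<And>x. x \<in> carrier Gr \<Longrightarrow> \<exists>y\<in>carrier Gr. y \<otimes>\<^bsub>Gr\<^esub> x = \<one>\<^bsub>Gr\<^esub>"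
    unfolding Gr_def using inv_GA by simp
qed

lemma finite_GA: "finite GA"
proof -
  let ?r = "\<lambda>\<sigma>. (restrict (fst \<sigma>) VY, restrict (snd \<sigma>) EdY)"
  have "inj_on ?r GA"
  proof (rule inj_onI)
    fix \<sigma> \<tau> assume s: "\<sigma> \<in> GA" and t: "\<tau> \<in> GA" and e: "?r \<sigma> = ?r \<tau>"
    have "fst \<sigma> = fst \<tau>"
    proof
      fix x show "fst \<sigma> x = fst \<tau> x"
        using e GA_D(4)[OF s] GA_D(4)[OF t] by (cases "x \<in> VY") (auto simp: fun_eq_iff restrict_def; metis)+
    qed
    moreover have "snd \<sigma> = snd \<tau>"
    proof
      fix x show "snd \<sigma> x = snd \<tau> x"
        using e GA_D(5)[OF s] GA_D(5)[OF t] by (cases "x \<in> EdY") (auto simp: fun_eq_iff restrict_def; metis)+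
    qed
    ultimately show "\<sigma> = \<tau>" by (simp add: prod_eq_iff)
  qed
  moreover have "?r ` GA \<subseteq> (VY \<rightarrow>\<^sub>E VY) \<times> (EdY \<rightarrow>\<^sub>E EdY)"
    using GA_in GA_inE by auto
  moreover have "finite ((VY \<rightarrow>\<^sub>E VY) \<times> (EdY \<rightarrow>\<^sub>E EdY))"
    using finVY finEY by (simp add: finite_PiE)
  ultimately show ?thesis using finite_imageD finite_subset by blast
qed

lemma fix_edge:
  assumes s: "\<sigma> \<in> GA" and e: "e \<in> EdY" and fx: "fst \<sigma> (oY e) = oY e"
  shows "snd \<sigma> e = e \<and> fst \<sigma> (tY e) = tY e"
proof -
  have w: "oY e \<in> VY" using eY[OF e] by simp
  have inj: "inj_on fE {e'\<in>EdY. oY e' = oY e}" using fE_out[OF w] by (simp add: bij_betw_def)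
  have "snd \<sigma> e \<in> {e'\<in>EdY. oY e' = oY e}" using GA_inE[OF s e] GA_D(3)[OF s e] fx by simp
  moreover have "e \<in> {e'\<in>EdY. oY e' = oY e}" using e by simp
  moreover have "fE (snd \<sigma> e) = fE e" using GA_D(7)[OF s e] .
  ultimately have "snd \<sigma> e = e" using inj by (meson inj_onD)
  then show ?thesis using GA_D(3)[OF s e] by metis
qed

lemma free:
  assumes s: "\<sigma> \<in> GA" and w: "w \<in> VY" and fx: "fst \<sigma> w = w"
  shows "\<sigma> = (id, id)"
proof -
  let ?R = "{(oY e, tY e) | e. e \<in> EdY}"
  have reach: "fst \<sigma> y = y" if "(x, y) \<in> ?R\<^sup>+" "fst \<sigma> x = x" for x y
    using that
  proof (induction rule: trancl_induct)
    case (base y)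
    then obtain e where "e \<in> EdY" "x = oY e" "y = tY e" by auto
    then show ?case using fix_edge[OF s] base by auto
  next
    case (step y z)
    then obtain e where "e \<in> EdY" "y = oY e" "z = tY e" by auto
    then show ?case using fix_edge[OF s] step by auto
  qed
  have allV: "fst \<sigma> y = y" for y
  proof (cases "y \<in> VY")
    case True
    show ?thesis
    proof (cases "y = w")
      case False
      then have "(w, y) \<in> ?R\<^sup>+" using scY w True unfolding strongly_connected_def by auto
      then show ?thesis using reach fx by blast
    qed (use fx in simp)
  next
    case False then show ?thesis using GA_D(4)[OF s] by simp
  qed
  have allE: "snd \<sigma> e = e" for e
  proof (cases "e \<in> EdY")
    case True then show ?thesis using fix_edge[OF s True] allV by simp
  next
    case False then show ?thesis using GA_D(5)[OF s] by simp
  qed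
  show ?thesis using allV allE by (simp add: prod_eq_iff fun_eq_iff)
qed

sublocale grp: comm_group Gr by (rule Gr_comm_group)

lemma carrier_Gr[simp]: "carrier Gr = GA" and mult_Gr[simp]: "mult Gr = aut_comp" and one_Gr[simp]: "one Gr = (id, id)"
  unfolding Gr_def by simp_all

lemma unique_act:
  assumes s: "\<sigma> \<in> GA" and t: "\<tau> \<in> GA" and w: "w \<in> VY" and e: "fst \<sigma> w = fst \<tau> w"
  shows "\<sigma> = \<tau>"
proof -
  let ?i = "inv\<^bsub>Gr\<^esub> \<tau>"
  have i: "?i \<in> GA" using t grp.inv_closed by simp
  have it: "aut_comp ?i \<tau> = (id, id)" using grp.l_inv[of \<tau>] t by simp
  have "fst ?i (fst \<tau> w) = w" using it by (simp add: aut_comp_def fun_eq_iff prod_eq_iff)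
  then have "fst (aut_comp ?i \<sigma>) w = w" using e by (simp add: aut_comp_def)
  then have "aut_comp ?i \<sigma> = (id, id)" using free comp_GA[OF i s] w by blast
  then have "?i \<otimes>\<^bsub>Gr\<^esub> \<sigma> = \<one>\<^bsub>Gr\<^esub>" by simp
  then have "inv\<^bsub>Gr\<^esub> \<sigma> = ?i" using s i by (intro grp.inv_equality) simp_all
  then have "inv\<^bsub>Gr\<^esub> (inv\<^bsub>Gr\<^esub> \<sigma>) = inv\<^bsub>Gr\<^esub> ?i" by simp
  then show ?thesis using s t by simp
qed

definition sec :: "'x \<Rightarrow> 'v" where "sec = vsection VY fV"

lemma sec:
  assumes v: "v \<in> VX" shows "sec v \<in> VY \<and> fV (sec v) = v"
proof -
  have "\<exists>w. w \<in> VY \<and> fV w = v" using v fVY by auto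
  then show ?thesis unfolding sec_def vsection_def by (rule someI_ex)
qed

definition lab :: "'v \<Rightarrow> ('v \<Rightarrow> 'v) \<times> ('e \<Rightarrow> 'e)" where
  "lab w = (THE \<sigma>. \<sigma> \<in> GA \<and> fst \<sigma> (sec (fV w)) = w)"

lemma lab_unique:
  assumes w: "w \<in> VY" and s: "\<sigma> \<in> GA" and e: "fst \<sigma> (sec (fV w)) = w"
  shows "lab w = \<sigma>"
proof -
  have sv: "sec (fV w) \<in> VY" using sec fVY w by blast
  show ?thesis unfolding lab_def
    by (rule the_equality) (use s e unique_act[OF _ _ sv] in auto)
qed

lemma lab:
  assumes w: "w \<in> VY"
  shows "lab w \<in> GA \<and> fst (lab w) (sec (fV w)) = w"
proof -
  have sv: "sec (fV w) \<in> VY" "fV (sec (fV w)) = fV w" using sec fVY w by blast+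
  obtain \<sigma> where "\<sigma> \<in> GA" "fst \<sigma> (sec (fV w)) = w" using trans_fib[OF sv(1) w sv(2)] by blast
  then show ?thesis using lab_unique[OF w] by simp
qed

lemma lab_act:
  assumes r: "\<rho> \<in> GA" and w: "w \<in> VY"
  shows "lab (fst \<rho> w) = aut_comp \<rho> (lab w)"
proof (rule lab_unique)
  show "fst \<rho> w \<in> VY" using GA_in[OF r w] .
  show "aut_comp \<rho> (lab w) \<in> GA" using comp_GA[OF r] lab[OF w] by simp
  show "fst (aut_comp \<rho> (lab w)) (sec (fV (fst \<rho> w))) = fst \<rho> w"
    using lab[OF w] GA_D(6)[OF r w] by (simp add: aut_comp_def)
qed

lemma lab_sec:
  assumes v: "v \<in> VX" and s: "\<sigma> \<in> GA" shows "lab (fst \<sigma> (sec v)) = \<sigma>"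
proof (rule lab_unique[OF _ s])
  show w: "fst \<sigma> (sec v) \<in> VY" using GA_in[OF s] sec[OF v] by simp
  have "fV (fst \<sigma> (sec v)) = v" using GA_D(6)[OF s] sec[OF v] by simp
  then show "fst \<sigma> (sec (fV (fst \<sigma> (sec v)))) = fst \<sigma> (sec v)" by simp
qed

lemma edge_elem_lab: "e \<in> EdY \<Longrightarrow> edge_elem VY EdY oY tY fV fE e = lab (tY e)"
  unfolding edge_elem_def lab_def sec_def by simp

lemma bij_VY: "bij_betw (\<lambda>w. (fV w, lab w)) VY (VX \<times> GA)"
proof (rule bij_betw_byWitness[of _ "\<lambda>(v, \<sigma>). fst \<sigma> (sec v)"])
  show "\<forall>w\<in>VY. (case (fV w, lab w) of (v, \<sigma>) \<Rightarrow> fst \<sigma> (sec v)) = w" using lab by simp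
  show "\<forall>p\<in>VX \<times> GA. (fV (case p of (v, \<sigma>) \<Rightarrow> fst \<sigma> (sec v)), lab (case p of (v, \<sigma>) \<Rightarrow> fst \<sigma> (sec v))) = p"
    using lab_sec sec GA_D(6) by auto
  show "(\<lambda>w. (fV w, lab w)) ` VY \<subseteq> VX \<times> GA" using lab fVY by auto
  show "(\<lambda>(v, \<sigma>). fst \<sigma> (sec v)) ` (VX \<times> GA) \<subseteq> VY" using sec GA_in by auto
qed

lemma card_VY: "card VY = card VX * card GA"
  using bij_betw_same_card[OF bij_VY] by (simp add: card_cartesian_product)

lemma fiber_bij: "v \<in> VX \<Longrightarrow> bij_betw (\<lambda>\<sigma>. fst \<sigma> (sec v)) GA {w\<in>VY. fV w = v}"
  by (rule bij_betw_byWitness[of _ lab]) (use lab_sec lab sec GA_in GA_D(6) in auto)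


end

lemma det_on_cong:
  assumes "\<And>a b. a \<in> V \<Longrightarrow> b \<in> V \<Longrightarrow> M a b = M' a b"
  shows "det_on V M = det_on V M'"
  unfolding det_on_def
proof (rule sum.cong[OF refl])
  fix p assume "p \<in> {p. p permutes V}"
  then have p: "p permutes V" by simp
  show "of_int (sign p) * (\<Prod>v\<in>V. M v (p v)) = of_int (sign p) * (\<Prod>v\<in>V. M' v (p v))"
    using assms permutes_in_image[OF p] by (auto intro!: prod.cong)
qed

lemma sum_pCons0: "(\<Sum>i\<in>S. [:0, f i:]) = [:0, \<Sum>i\<in>S. f i:]"
  by (induction S rule: infinite_finite_induct) auto

lemma sum_const_poly: "(\<Sum>i\<in>S. [:f i:]) = [:\<Sum>i\<in>S. f i:]"
  by (induction S rule: infinite_finite_induct) auto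

lemma mult_pCons0_const: "[:0, c:] * [:d:] = [:0, c * d:]"
  by (simp add: mult.commute)


context gcov
begin

lemma inv_act:
  assumes r: "\<rho> \<in> GA"
  shows "inv\<^bsub>Gr\<^esub> \<rho> \<in> GA" "\<And>x. fst (inv\<^bsub>Gr\<^esub> \<rho>) (fst \<rho> x) = x" "\<And>x. snd (inv\<^bsub>Gr\<^esub> \<rho>) (snd \<rho> x) = x"
    "\<And>x. fst \<rho> (fst (inv\<^bsub>Gr\<^esub> \<rho>) x) = x" "\<And>x. snd \<rho> (snd (inv\<^bsub>Gr\<^esub> \<rho>) x) = x"
proof -
  show "inv\<^bsub>Gr\<^esub> \<rho> \<in> GA" using r grp.inv_closed by simp
  have 1: "aut_comp (inv\<^bsub>Gr\<^esub> \<rho>) \<rho> = (id, id)" using grp.l_inv[of \<rho>] r by simp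
  have 2: "aut_comp \<rho> (inv\<^bsub>Gr\<^esub> \<rho>) = (id, id)" using grp.r_inv[of \<rho>] r by simp
  show "\<And>x. fst (inv\<^bsub>Gr\<^esub> \<rho>) (fst \<rho> x) = x" "\<And>x. snd (inv\<^bsub>Gr\<^esub> \<rho>) (snd \<rho> x) = x"
    using 1 by (auto simp: aut_comp_def fun_eq_iff)
  show "\<And>x. fst \<rho> (fst (inv\<^bsub>Gr\<^esub> \<rho>) x) = x" "\<And>x. snd \<rho> (snd (inv\<^bsub>Gr\<^esub> \<rho>) x) = x"
    using 2 by (auto simp: aut_comp_def fun_eq_iff)
qed

definition Mf :: "((('v\<Rightarrow>'v)\<times>('e\<Rightarrow>'e)) \<Rightarrow> 'f::field) \<Rightarrow> 'x \<Rightarrow> 'x \<Rightarrow> 'f" where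
  "Mf \<phi> v v' = (\<Sum>\<epsilon>\<in>{\<epsilon>\<in>EdY. oY \<epsilon> = vsection VY fV v \<and> fV (tY \<epsilon>) = v'}.
                 \<phi> (edge_elem VY EdY oY tY fV fE \<epsilon>))"

lemma adj_sum:
  assumes w: "w \<in> VY"
  shows "(\<Sum>w'\<in>VY. of_nat (adj_count EdY oY tY w w') * h w') = (\<Sum>e\<in>{e\<in>EdY. oY e = w}. (h (tY e) :: 'f::field))"
proof -
  have "(\<Sum>e\<in>{e\<in>EdY. oY e = w}. h (tY e)) = (\<Sum>w'\<in>VY. \<Sum>e\<in>{x. x \<in> {e\<in>EdY. oY e = w} \<and> tY x = w'}. h (tY e))"
    by (rule sum.group[symmetric]) (use finVY finEY eY in auto)
  also have "\<dots> = (\<Sum>w'\<in>VY. of_nat (adj_count EdY oY tY w w') * h w')"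
  proof (rule sum.cong[OF refl])
    fix w' assume "w' \<in> VY"
    have "(\<Sum>e\<in>{x. x \<in> {e\<in>EdY. oY e = w} \<and> tY x = w'}. h (tY e)) = (\<Sum>e\<in>{e\<in>EdY. oY e = w \<and> tY e = w'}. h w')"
      by (rule sum.cong) auto
    then show "(\<Sum>e\<in>{x. x \<in> {e\<in>EdY. oY e = w} \<and> tY x = w'}. h (tY e)) = of_nat (adj_count EdY oY tY w w') * h w'"
      unfolding adj_count_def by simp
  qed
  finally show ?thesis by simp
qed

lemma eigen:
  fixes \<phi> :: "(('v\<Rightarrow>'v)\<times>('e\<Rightarrow>'e)) \<Rightarrow> 'f::field"
  assumes w: "w \<in> VY" and phi: "\<phi> \<in> characters GA aut_comp"
  shows "(\<Sum>w'\<in>VY. of_nat (adj_count EdY oY tY w w') * (if fV w' = v' then \<phi> (lab w') else 0))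
         = \<phi> (lab w) * Mf \<phi> (fV w) v'"
proof -
  let ?E0 = "{\<epsilon>\<in>EdY. oY \<epsilon> = sec (fV w) \<and> fV (tY \<epsilon>) = v'}"
  let ?E1 = "{e\<in>EdY. oY e = w \<and> fV (tY e) = v'}"
  define \<rho> where "\<rho> = lab w"
  have r: "\<rho> \<in> GA" and rs: "fst \<rho> (sec (fV w)) = w" using lab[OF w] unfolding \<rho>_def by auto
  have phim: "\<And>a b. a \<in> GA \<Longrightarrow> b \<in> GA \<Longrightarrow> \<phi> (aut_comp a b) = \<phi> a * \<phi> b"
    using phi unfolding characters_def by auto
  let ?\<rho>' = "inv\<^bsub>Gr\<^esub> \<rho>"
  note ia = inv_act[OF r]
  have bij: "bij_betw (snd \<rho>) ?E0 ?E1"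
  proof (rule bij_betw_byWitness[of _ "snd ?\<rho>'"])
    show "\<forall>a\<in>?E0. snd ?\<rho>' (snd \<rho> a) = a" using ia by simp
    show "\<forall>a\<in>?E1. snd \<rho> (snd ?\<rho>' a) = a" using ia by simp
    show "snd \<rho> ` ?E0 \<subseteq> ?E1"
    proof
      fix x assume "x \<in> snd \<rho> ` ?E0"
      then obtain e where e: "e \<in> EdY" "fV (tY e) = v'" "oY e = sec (fV w)" and x: "x = snd \<rho> e" by auto
      show "x \<in> ?E1"
        using GA_inE[OF r e(1)] GA_D(3)[OF r e(1)] rs e GA_D(6)[OF r] eY[OF e(1)] x by simp
    qed
    show "snd ?\<rho>' ` ?E1 \<subseteq> ?E0"
    proof
      fix x assume "x \<in> snd ?\<rho>' ` ?E1"
      then obtain e where e: "e \<in> EdY" "fV (tY e) = v'" "oY e = w" and x: "x = snd ?\<rho>' e" by auto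
      have "fst ?\<rho>' w = sec (fV w)" using ia(2) rs by metis
      then show "x \<in> ?E0"
        using GA_inE[OF ia(1) e(1)] GA_D(3)[OF ia(1) e(1)] e GA_D(6)[OF ia(1)] eY[OF e(1)] x by simp
    qed
  qed
  have E1eq: "{e\<in>{e\<in>EdY. oY e = w}. fV (tY e) = v'} = ?E1" by auto
  have "(\<Sum>w'\<in>VY. of_nat (adj_count EdY oY tY w w') * (if fV w' = v' then \<phi> (lab w') else 0))
      = (\<Sum>e\<in>{e\<in>EdY. oY e = w}. (if fV (tY e) = v' then \<phi> (lab (tY e)) else 0))"
    by (rule adj_sum[OF w])
  also have "\<dots> = (\<Sum>e\<in>?E1. \<phi> (lab (tY e)))"
    unfolding E1eq[symmetric] using finEY by (simp add: sum.inter_filter) (intro sum.cong; auto)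
  also have "\<dots> = (\<Sum>\<epsilon>\<in>?E0. \<phi> (lab (tY (snd \<rho> \<epsilon>))))"
    using sum.reindex_bij_betw[OF bij, of "\<lambda>e. \<phi> (lab (tY e))"] by simp
  also have "\<dots> = (\<Sum>\<epsilon>\<in>?E0. \<phi> \<rho> * \<phi> (lab (tY \<epsilon>)))"
  proof (rule sum.cong[OF refl])
    fix \<epsilon> assume "\<epsilon> \<in> ?E0"
    then have e: "\<epsilon> \<in> EdY" by simp
    have "lab (tY (snd \<rho> \<epsilon>)) = aut_comp \<rho> (lab (tY \<epsilon>))"
      using GA_D(3)[OF r e] lab_act[OF r] eY[OF e] by simp
    then show "\<phi> (lab (tY (snd \<rho> \<epsilon>))) = \<phi> \<rho> * \<phi> (lab (tY \<epsilon>))"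
      using phim r lab eY[OF e] by simp
  qed
  also have "\<dots> = \<phi> \<rho> * Mf \<phi> (fV w) v'"
    unfolding Mf_def sum_distrib_left sec_def using edge_elem_lab by (intro sum.cong) auto
  finally show ?thesis unfolding \<rho>_def .
qed

lemma claim2:
  fixes \<phi> :: "(('v\<Rightarrow>'v)\<times>('e\<Rightarrow>'e)) \<Rightarrow> 'f::field"
  assumes w: "w \<in> VY" and v': "v' \<in> VX" and phi: "\<phi> \<in> CH" and finCH: "finite CH"
  defines "Pm \<equiv> (\<lambda>w (v, \<psi>). [:if fV w = v then \<psi> (lab w) else 0:])"
    and "BY \<equiv> (\<lambda>w w'. (if w = w' then 1 else 0) - [:0, of_nat (adj_count EdY oY tY w w'):])"
    and "Dm \<equiv> (\<lambda>\<psi> v v'. (if v = v' then 1 else 0) - [:0, Mf \<psi> v v':])"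
  assumes CH: "CH = characters GA aut_comp"
  shows "(\<Sum>w'\<in>VY. BY w w' * Pm w' (v', \<phi>)) =
         (\<Sum>j\<in>VX \<times> CH. Pm w j * (\<lambda>(a,x) (b,y). if x = y then Dm x a b else 0) j (v', \<phi>))"
proof -
  define p where "p = (\<lambda>w'. if fV w' = v' then \<phi> (lab w') else 0)"
  have "(\<Sum>w'\<in>VY. BY w w' * Pm w' (v', \<phi>)) =
        (\<Sum>w'\<in>VY. (if w = w' then [:p w':] else 0) - [:0, of_nat (adj_count EdY oY tY w w') * p w':])"
    unfolding BY_def Pm_def p_def by (intro sum.cong) (auto simp: algebra_simps)
  also have "\<dots> = [:p w:] - [:0, \<Sum>w'\<in>VY. of_nat (adj_count EdY oY tY w w') * p w':]"
    using w finVY by (simp add: sum_subtractf sum_pCons0)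
  also have "(\<Sum>w'\<in>VY. of_nat (adj_count EdY oY tY w w') * p w') = \<phi> (lab w) * Mf \<phi> (fV w) v'"
    unfolding p_def using eigen[OF w, of \<phi>] phi CH by simp
  finally have L: "(\<Sum>w'\<in>VY. BY w w' * Pm w' (v', \<phi>)) = [:p w:] - [:0, \<phi> (lab w) * Mf \<phi> (fV w) v':]" .
  define q where "q = (\<lambda>v. if fV w = v then \<phi> (lab w) else 0)"
  have "(\<Sum>j\<in>VX \<times> CH. Pm w j * (\<lambda>(a,x) (b,y). if x = y then Dm x a b else 0) j (v', \<phi>))
      = (\<Sum>v\<in>VX. \<Sum>\<psi>\<in>CH. Pm w (v, \<psi>) * (if \<psi> = \<phi> then Dm \<psi> v v' else 0))"
    by (simp add: sum.cartesian_product) (rule sum.cong; auto split: prod.splits)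
  also have "\<dots> = (\<Sum>v\<in>VX. Pm w (v, \<phi>) * Dm \<phi> v v')"
  proof (rule sum.cong[OF refl])
    fix v
    have "(\<Sum>\<psi>\<in>CH. Pm w (v, \<psi>) * (if \<psi> = \<phi> then Dm \<psi> v v' else 0)) = (\<Sum>\<psi>\<in>CH. if \<psi> = \<phi> then Pm w (v, \<phi>) * Dm \<phi> v v' else 0)"
      by (intro sum.cong) auto
    also have "\<dots> = Pm w (v, \<phi>) * Dm \<phi> v v'" using finCH phi by simp
    finally show "(\<Sum>\<psi>\<in>CH. Pm w (v, \<psi>) * (if \<psi> = \<phi> then Dm \<psi> v v' else 0)) = Pm w (v, \<phi>) * Dm \<phi> v v'" .
  qed
  also have "\<dots> = (\<Sum>v\<in>VX. (if v = v' then [:q v:] else 0) - [:0, q v * Mf \<phi> v v':])"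
    unfolding Pm_def Dm_def q_def by (intro sum.cong) (auto simp: algebra_simps)
  also have "\<dots> = [:q v':] - [:0, \<Sum>v\<in>VX. q v * Mf \<phi> v v':]"
    using v' finVX by (simp add: sum_subtractf sum_pCons0)
  also have "(\<Sum>v\<in>VX. q v * Mf \<phi> v v') = \<phi> (lab w) * Mf \<phi> (fV w) v'"
  proof -
    have "(\<Sum>v\<in>VX. q v * Mf \<phi> v v') = (\<Sum>v\<in>VX. if fV w = v then \<phi> (lab w) * Mf \<phi> v v' else 0)"
      unfolding q_def by (intro sum.cong) auto
    also have "\<dots> = \<phi> (lab w) * Mf \<phi> (fV w) v'" using finVX imageI[OF w, of fV] fVY by (simp add: sum.delta)
    finally show ?thesis .
  qed
  finally show ?thesis using L unfolding p_def q_def by simp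
qed

lemma claim3:
  fixes \<phi> \<psi> :: "(('v\<Rightarrow>'v)\<times>('e\<Rightarrow>'e)) \<Rightarrow> 'f::field"
  assumes v: "v \<in> VX" and v': "v' \<in> VX" and phi: "\<phi> \<in> characters GA aut_comp" and psi: "\<psi> \<in> characters GA aut_comp"
  shows "(\<Sum>w\<in>VY. [:if fV w = v then inverse (\<phi> (lab w)) else 0:] * [:if fV w = v' then \<psi> (lab w) else 0:])
         = (if (v, \<phi>) = (v', \<psi>) then [:of_nat (card GA):] else 0)"
proof -
  have "(\<Sum>w\<in>VY. [:if fV w = v then inverse (\<phi> (lab w)) else 0:] * [:if fV w = v' then \<psi> (lab w) else 0:])
      = [:\<Sum>w\<in>VY. (if fV w = v then inverse (\<phi> (lab w)) else 0) * (if fV w = v' then \<psi> (lab w) else 0):]"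
    by (simp add: sum_const_poly mult.commute)
  also have "(\<Sum>w\<in>VY. (if fV w = v then inverse (\<phi> (lab w)) else 0) * (if fV w = v' then \<psi> (lab w) else 0))
      = (if v = v' then (\<Sum>w\<in>{w\<in>VY. fV w = v}. inverse (\<phi> (lab w)) * \<psi> (lab w)) else 0)"
  proof (cases "v = v'")
    case True
    have "(\<Sum>w\<in>VY. (if fV w = v then inverse (\<phi> (lab w)) else 0) * (if fV w = v' then \<psi> (lab w) else 0))
        = (\<Sum>w\<in>VY. if fV w = v then inverse (\<phi> (lab w)) * \<psi> (lab w) else 0)"
      using True by (intro sum.cong) auto
    also have "\<dots> = (\<Sum>w\<in>{w\<in>VY. fV w = v}. inverse (\<phi> (lab w)) * \<psi> (lab w))"
      using finVY by (simp add: sum.inter_filter)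
    finally show ?thesis using True by simp
  next
    case False
    then show ?thesis by (intro trans[OF sum.neutral]) auto
  qed
  also have "(\<Sum>w\<in>{w\<in>VY. fV w = v}. inverse (\<phi> (lab w)) * \<psi> (lab w)) = (\<Sum>\<sigma>\<in>GA. inverse (\<phi> \<sigma>) * \<psi> \<sigma>)"
    using sum.reindex_bij_betw[OF fiber_bij[OF v], of "\<lambda>w. inverse (\<phi> (lab w)) * \<psi> (lab w)"] lab_sec[OF v]
    by simp
  also have "\<dots> = (if \<phi> = \<psi> then of_nat (card GA) else 0)"
    using grp.char_orth[of \<phi> \<psi>] finite_GA phi psi by simp
  finally show ?thesis by auto
qed

theorem main_det:
  shows "det_on VY (\<lambda>w w'. (if w = w' then 1 else 0) - [:0, of_nat (adj_count EdY oY tY w w'):] :: 'f poly)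
       = (\<Prod>\<phi>\<in>(characters GA aut_comp :: (('v\<Rightarrow>'v)\<times>('e\<Rightarrow>'e) \<Rightarrow> 'f::{alg_closed_field, field_char_0}) set).
            det_on VX (\<lambda>v v'. (if v = v' then 1 else 0) - [:0, Mf \<phi> v v':]))"
proof -
  define CH where "CH = (characters GA aut_comp :: (('v\<Rightarrow>'v)\<times>('e\<Rightarrow>'e) \<Rightarrow> 'f) set)"
  have cardCH: "card CH = card GA" using grp.chars_count[where 'f='f] finite_GA unfolding CH_def by simp
  have "card GA > 0" using finite_GA id_GA card_gt_0_iff by blast
  then have finCH: "finite CH" using cardCH card_gt_0_iff by metis
  define J where "J = VX \<times> CH"
  have finJ: "finite J" unfolding J_def using finVX finCH by simp
  have cardJ: "card VY = card J" unfolding J_def using cardCH card_VY by (simp add: card_cartesian_product)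
  obtain \<beta> where \<beta>: "bij_betw \<beta> VY J" using finite_same_card_bij[OF finVY finJ cardJ] by blast
  have \<beta>J: "\<And>w. w \<in> VY \<Longrightarrow> \<beta> w \<in> J" using \<beta> bij_betwE by blast
  define Pm where "Pm \<equiv> (\<lambda>w (v, \<psi>::('v\<Rightarrow>'v)\<times>('e\<Rightarrow>'e) \<Rightarrow> 'f). [:if fV w = v then \<psi> (lab w) else 0:])"
  define Qm where "Qm \<equiv> (\<lambda>(v, \<psi>::('v\<Rightarrow>'v)\<times>('e\<Rightarrow>'e) \<Rightarrow> 'f) w. [:if fV w = v then inverse (\<psi> (lab w)) else 0:])"
  define BY where "BY \<equiv> (\<lambda>w w'. (if w = w' then 1 else 0) - [:0, of_nat (adj_count EdY oY tY w w'):] :: 'f poly)"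
  define Dm where "Dm \<equiv> (\<lambda>\<psi> v v'. (if v = v' then 1 else 0) - [:0, Mf \<psi> v v':] :: 'f poly)"
  define D' where "D' = (\<lambda>(a,x) (b,y). if x = y then Dm x a b else 0)"
  define Ph where "Ph = (\<lambda>w w2. Pm w (\<beta> w2))"
  define Qh where "Qh = (\<lambda>w2 w. Qm (\<beta> w2) w)"
  define Dh where "Dh = (\<lambda>w3 w2. D' (\<beta> w3) (\<beta> w2))"
  have E1: "det_on VY (\<lambda>a c. \<Sum>b\<in>VY. BY a b * Ph b c) = det_on VY (\<lambda>a c. \<Sum>b\<in>VY. Ph a b * Dh b c)"
  proof (rule det_on_cong)
    fix a c assume a: "a \<in> VY" and c: "c \<in> VY"
    obtain v' \<phi> where bc: "\<beta> c = (v', \<phi>)" "v' \<in> VX" "\<phi> \<in> CH" using \<beta>J[OF c] unfolding J_def by auto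
    have "(\<Sum>b\<in>VY. BY a b * Ph b c) = (\<Sum>b\<in>VY. BY a b * Pm b (v', \<phi>))" unfolding Ph_def bc by simp
    also have "\<dots> = (\<Sum>j\<in>VX \<times> CH. Pm a j * D' j (v', \<phi>))"
      using claim2[OF a bc(2) bc(3) finCH CH_def] unfolding Pm_def BY_def Dm_def D'_def by simp
    also have "\<dots> = (\<Sum>b\<in>VY. Pm a (\<beta> b) * D' (\<beta> b) (v', \<phi>))"
      using sum.reindex_bij_betw[OF \<beta>, of "\<lambda>j. Pm a j * D' j (v', \<phi>)"] unfolding J_def by simp
    also have "\<dots> = (\<Sum>b\<in>VY. Ph a b * Dh b c)" unfolding Ph_def Dh_def bc by simp
    finally show "(\<Sum>b\<in>VY. BY a b * Ph b c) = (\<Sum>b\<in>VY. Ph a b * Dh b c)" .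
  qed
  have E2: "det_on VY BY * det_on VY Ph = det_on VY Ph * det_on VY Dh"
    using E1 det_on_mult[OF finVY, of BY Ph] det_on_mult[OF finVY, of Ph Dh] by simp
  have E3: "det_on VY Dh = (\<Prod>\<phi>\<in>CH. det_on VX (Dm \<phi>))"
  proof -
    have "det_on J D' = det_on VY Dh" unfolding Dh_def by (rule det_on_reindex[OF \<beta> finVY])
    moreover have "det_on J D' = (\<Prod>\<phi>\<in>CH. det_on VX (Dm \<phi>))"
      unfolding J_def D'_def by (rule det_on_blockdiag[OF finVX finCH])
    ultimately show ?thesis by simp
  qed
  have E4: "det_on VY (\<lambda>a c. \<Sum>b\<in>VY. Qh a b * Ph b c) = [:of_nat (card GA):] ^ card VY"
  proof -
    have "det_on VY (\<lambda>a c. \<Sum>b\<in>VY. Qh a b * Ph b c) = det_on VY (\<lambda>a c. if a = c then [:of_nat (card GA):] else 0)"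
    proof (rule det_on_cong)
      fix a c assume a: "a \<in> VY" and c: "c \<in> VY"
      obtain v \<phi> where ba: "\<beta> a = (v, \<phi>)" "v \<in> VX" "\<phi> \<in> CH" using \<beta>J[OF a] unfolding J_def by auto
      obtain v' \<psi> where bc: "\<beta> c = (v', \<psi>)" "v' \<in> VX" "\<psi> \<in> CH" using \<beta>J[OF c] unfolding J_def by auto
      have "(\<Sum>b\<in>VY. Qh a b * Ph b c) = (\<Sum>w\<in>VY. [:if fV w = v then inverse (\<phi> (lab w)) else 0:] * [:if fV w = v' then \<psi> (lab w) else 0:])"
        unfolding Qh_def Ph_def ba bc Qm_def Pm_def by simp
      also have "\<dots> = (if (v, \<phi>) = (v', \<psi>) then [:of_nat (card GA):] else 0)"
        by (rule claim3[OF ba(2) bc(2)]) (use ba(3) bc(3) CH_def in auto)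
      also have "\<dots> = (if a = c then [:of_nat (card GA):] else 0)"
        using inj_on_eq_iff[OF bij_betw_imp_inj_on[OF \<beta>] a c] ba(1) bc(1) by simp
      finally show "(\<Sum>b\<in>VY. Qh a b * Ph b c) = (if a = c then [:of_nat (card GA):] else 0)" .
    qed
    also have "\<dots> = [:of_nat (card GA):] ^ card VY" by (rule det_on_diag[OF finVY])
    finally show ?thesis .
  qed
  have "[:of_nat (card GA) :: 'f:] \<noteq> 0" using \<open>card GA > 0\<close> by simp
  then have "det_on VY Qh * det_on VY Ph \<noteq> 0" using E4 det_on_mult[OF finVY, of Qh Ph] by simp
  then have "det_on VY Ph \<noteq> 0" by simp
  then have "det_on VY BY = det_on VY Dh" using E2 by (simp add: mult.commute)
  then show ?thesis using E3 unfolding BY_def Dm_def CH_def by simp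
qed

end

lemma det_on_map_of_int:
  "map_poly (of_int :: int \<Rightarrow> 'f::{field_char_0}) (det_on V M) = det_on V (\<lambda>a b. map_poly of_int (M a b))"
  unfolding det_on_def by (simp add: of_int_poly_hom.hom_sum of_int_poly_hom.hom_prod of_int_poly_hom.hom_mult of_int_poly_hom.hom_of_int)

lemma map_entry: "map_poly (of_int :: int \<Rightarrow> 'f::{field_char_0}) ((if a = b then 1 else 0) - [:0, of_nat n:]) =
   (if a = b then 1 else 0) - [:0, of_nat n:]"
proof -
  have "map_poly (of_int :: int \<Rightarrow> 'f) [:0, of_nat n:] = [:0, of_nat n:]"
    by (rule poly_eqI) (simp add: coeff_map_poly coeff_pCons split: nat.split)
  then show ?thesis by (simp add: of_int_poly_hom.hom_minus)
qed

context gcov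
begin

lemma triv_CH: "trivial_character GA \<in> characters GA aut_comp"
  unfolding characters_def trivial_character_def using comp_GA by auto

lemma Mf_triv:
  assumes v: "v \<in> VX"
  shows "Mf (trivial_character GA :: _ \<Rightarrow> 'f::field) v v' = of_nat (adj_count EdX oX tX v v')"
proof -
  let ?E0 = "{\<epsilon>\<in>EdY. oY \<epsilon> = vsection VY fV v \<and> fV (tY \<epsilon>) = v'}"
  have "Mf (trivial_character GA :: _ \<Rightarrow> 'f) v v' = (\<Sum>\<epsilon>\<in>?E0. 1)"
    unfolding Mf_def trivial_character_def
    by (intro sum.cong) (use edge_elem_lab lab eY in auto)
  also have "\<dots> = of_nat (card ?E0)" by simp
  also have "card ?E0 = adj_count EdX oX tX v v'"
  proof -
    have sv: "sec v \<in> VY" "fV (sec v) = v" using sec[OF v] by auto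
    have bij: "bij_betw fE {e\<in>EdY. oY e = sec v} {e\<in>EdX. oX e = v}" using fE_out[OF sv(1)] sv(2) by simp
    have sub: "?E0 \<subseteq> {e\<in>EdY. oY e = sec v}" unfolding sec_def by auto
    have inj: "inj_on fE ?E0" using bij_betw_imp_inj_on[OF bij] sub inj_on_subset by blast
    have "fE ` ?E0 = {d\<in>EdX. oX d = v \<and> tX d = v'}"
    proof
      show "fE ` ?E0 \<subseteq> {d\<in>EdX. oX d = v \<and> tX d = v'}"
        using fE_mor sv unfolding sec_def by auto
      show "{d\<in>EdX. oX d = v \<and> tX d = v'} \<subseteq> fE ` ?E0"
      proof
        fix d assume d: "d \<in> {d\<in>EdX. oX d = v \<and> tX d = v'}"
        then have "d \<in> {e\<in>EdX. oX e = v}" by simp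
        then have "d \<in> fE ` {e\<in>EdY. oY e = sec v}" using bij unfolding bij_betw_def by simp
        then obtain e where e: "e \<in> {e\<in>EdY. oY e = sec v}" "fE e = d" by (rule imageE) simp
        have "fV (tY e) = v'" using fE_mor[of e] e d by auto
        then show "d \<in> fE ` ?E0" using e unfolding sec_def by auto
      qed
    qed
    then show ?thesis unfolding adj_count_def using card_image[OF inj] by simp
  qed
  finally show ?thesis .
qed

end

theorem theorem3p13:
  fixes VY :: "'v set" and EdY :: "'e set" and oY tY :: "'e \<Rightarrow> 'v"
    and VX :: "'x set" and EdX :: "'d set" and oX tX :: "'d \<Rightarrow> 'x"
    and fV :: "'v \<Rightarrow> 'x" and fE :: "'e \<Rightarrow> 'd"
  assumes "finite VY" "finite EdY" "digraph VY EdY oY tY"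
    and "finite VX" "finite EdX" "digraph VX EdX oX tX"
    and "galois_cover VY EdY oY tY VX EdX oX tX fV fE"
    and "\<forall>\<sigma>\<in>Aut_cover VY EdY oY tY fV fE. \<forall>\<tau>\<in>Aut_cover VY EdY oY tY fV fE.
           aut_comp \<sigma> \<tau> = aut_comp \<tau> \<sigma>"
  shows "map_poly (of_int :: int \<Rightarrow> 'f::{alg_closed_field, field_char_0}) (g_dg VY EdY oY tY)
       = map_poly of_int (g_dg VX EdX oX tX) *
         (\<Prod>\<psi>\<in>characters (Aut_cover VY EdY oY tY fV fE) aut_comp
               - {trivial_character (Aut_cover VY EdY oY tY fV fE)}.
            g_twisted VY EdY oY tY VX fV fE \<psi>)"
proof -
  interpret gcov VY EdY oY tY VX EdX oX tX fV fE using assms by unfold_locales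
  define CH where "CH = (characters GA aut_comp :: (('v\<Rightarrow>'v)\<times>('e\<Rightarrow>'e) \<Rightarrow> 'f) set)"
  have cardCH: "card CH = card GA" using grp.chars_count[where 'f='f] finite_GA unfolding CH_def by simp
  have "card GA > 0" using finite_GA id_GA card_gt_0_iff by blast
  then have finCH: "finite CH" using cardCH card_gt_0_iff by metis
  have tw: "g_twisted VY EdY oY tY VX fV fE \<psi> = det_on VX (\<lambda>v v'. (if v = v' then 1 else 0) - [:0, Mf \<psi> v v':])"
    for \<psi> :: "('v\<Rightarrow>'v)\<times>('e\<Rightarrow>'e) \<Rightarrow> 'f"
    unfolding g_twisted_def Mf_def by simp
  have L: "map_poly (of_int :: int \<Rightarrow> 'f) (g_dg VY EdY oY tY) =
     det_on VY (\<lambda>w w'. (if w = w' then 1 else 0) - [:0, of_nat (adj_count EdY oY tY w w'):] :: 'f poly)"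
    unfolding g_dg_def det_on_map_of_int map_entry ..
  have X: "map_poly (of_int :: int \<Rightarrow> 'f) (g_dg VX EdX oX tX) = g_twisted VY EdY oY tY VX fV fE (trivial_character GA)"
    unfolding tw g_dg_def det_on_map_of_int map_entry
    by (rule det_on_cong) (simp add: Mf_triv)
  have "map_poly (of_int :: int \<Rightarrow> 'f) (g_dg VY EdY oY tY) = (\<Prod>\<phi>\<in>CH. g_twisted VY EdY oY tY VX fV fE \<phi>)"
    unfolding L tw CH_def by (rule main_det)
  also have "\<dots> = g_twisted VY EdY oY tY VX fV fE (trivial_character GA) *
      (\<Prod>\<phi>\<in>CH - {trivial_character GA}. g_twisted VY EdY oY tY VX fV fE \<phi>)"
    using prod.remove[OF finCH, of "trivial_character GA"] triv_CH unfolding CH_def by simp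
  finally show ?thesis unfolding X CH_def by simp
qed

end
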